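(* Let $q=AB$ be a two-atom query over $R$ with $A=R(\bar x)$, $B=R(\bar y)$, satisfying the standing assumption below, and let $\mathrm{sjf}(q) = R_1(\bar x)\wedge R_2(\bar y)$. There is a polynomial-time reduction from $\mathrm{certain}(\mathrm{sjf}(q))$ to $\mathrm{certain}(q)$.
   Context: $R$ is a relation symbol of arity $k\ge 1$ whose first $l$ positions form its primary key; $R_1,R_2$ are two distinct relation symbols of the same arity $k$ and with the same first $l$ key positions. Facts are $S(\bar a)$ ($S$ a relation symbol, $\bar a$ a tuple of elements), atoms are $S(\bar x)$ with $\bar x$ a tuple of variables. The key tuple $\overline{\mathrm{key}}(t)$ of a term is the tuple of its first $l$ entries. Two facts are key-equal if they use the same relation symbol and have equal key tuples. A database is a finite set of facts; a block is a maximal set of pairwise key-equal facts; a repair is a $\subseteq$-maximal subset with no two distinct key-equal facts. A two-atom query $q=AB$ denotes $\exists\bar y (A\wedge B)$, satisfied by $D$ if some mapping $\mu$ from variables to elements has $\mu(A),\mu(B)\in D$. For a fixed query $p$, $\mathrm{certain}(p)$ is the problem: given a database $D$, decide whether every repair of $D$ satisfies $p$. Standing assumption: $\overline{\mathrm{key}}(A)\neq\overline{\mathrm{key}}(B)$ and $q$ is not equivalent, over all consistent databases (databases that are their own repair), to a query consisting of a single atom. *)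

theory Defs
  imports Main
begin

text \<open>Elements are natural numbers, relation symbols are natural numbers.
  A fact S(a) is a pair (S, a). All relation symbols considered have arity k and
  their first l positions form the primary key.\<close>

type_synonym fact = "nat \<times> nat list"

definition relR :: nat where "relR = 0"
definition relR1 :: nat where "relR1 = 1"
definition relR2 :: nat where "relR2 = 2"

definition key_tuple :: "nat \<Rightarrow> fact \<Rightarrow> nat list" where
  "key_tuple l f = take l (snd f)"

definition key_equal :: "nat \<Rightarrow> fact \<Rightarrow> fact \<Rightarrow> bool" where
  "key_equal l f g \<longleftrightarrow> fst f = fst g \<and> key_tuple l f = key_tuple l g"

definition db_over :: "nat set \<Rightarrow> nat \<Rightarrow> fact set \<Rightarrow> bool" where
  "db_over Ss k D \<longleftrightarrow> finite D \<and> (\<forall>f\<in>D. fst f \<in> Ss \<and> length (snd f) = k)"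

definition consistent :: "nat \<Rightarrow> fact set \<Rightarrow> bool" where
  "consistent l D \<longleftrightarrow> (\<forall>f\<in>D. \<forall>g\<in>D. key_equal l f g \<longrightarrow> f = g)"

definition is_repair :: "nat \<Rightarrow> fact set \<Rightarrow> fact set \<Rightarrow> bool" where
  "is_repair l D r \<longleftrightarrow> r \<subseteq> D \<and> consistent l r \<and>
     (\<forall>r'. r \<subseteq> r' \<longrightarrow> r' \<subseteq> D \<longrightarrow> consistent l r' \<longrightarrow> r' = r)"

definition certain :: "nat \<Rightarrow> (fact set \<Rightarrow> bool) \<Rightarrow> fact set \<Rightarrow> bool" where
  "certain l P D \<longleftrightarrow> (\<forall>r. is_repair l D r \<longrightarrow> P r)"

text \<open>Satisfaction of the two-atom query S1(xs) /\ S2(ys) (variables are nats,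
  all variables existentially quantified), and of a single-atom query S(zs).\<close>
definition sat2 :: "nat \<times> nat list \<Rightarrow> nat \<times> nat list \<Rightarrow> fact set \<Rightarrow> bool" where
  "sat2 A B D \<longleftrightarrow> (\<exists>\<mu>::nat \<Rightarrow> nat. (fst A, map \<mu> (snd A)) \<in> D \<and> (fst B, map \<mu> (snd B)) \<in> D)"

definition sat1 :: "nat \<times> nat list \<Rightarrow> fact set \<Rightarrow> bool" where
  "sat1 C D \<longleftrightarrow> (\<exists>\<mu>::nat \<Rightarrow> nat. (fst C, map \<mu> (snd C)) \<in> D)"

definition standing_assumption :: "nat \<Rightarrow> nat \<Rightarrow> nat list \<Rightarrow> nat list \<Rightarrow> bool" where
  "standing_assumption k l xs ys \<longleftrightarrow>
     take l xs \<noteq> take l ys \<and>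
     \<not> (\<exists>zs. length zs = k \<and>
          (\<forall>D. db_over {relR} k D \<and> consistent l D \<longrightarrow>
               (sat2 (relR, xs) (relR, ys) D \<longleftrightarrow> sat1 (relR, zs) D)))"

text \<open>Alphabet {1,2,3,4}: 1 = bit 0, 2 = bit 1, 3 = end of number, 4 = end of fact.\<close>

fun bin :: "nat \<Rightarrow> nat list" where
  "bin n = (if n = 0 then [] else bin (n div 2) @ [n mod 2 + 1])"

definition enc_nat :: "nat \<Rightarrow> nat list" where
  "enc_nat n = bin n @ [3]"

definition enc_fact :: "fact \<Rightarrow> nat list" where
  "enc_fact f = enc_nat (fst f) @ concat (map enc_nat (snd f)) @ [4]"

definition enc_db :: "fact list \<Rightarrow> nat list" where
  "enc_db fs = concat (map enc_fact fs)"

definition certain_lang :: "nat set \<Rightarrow> nat \<Rightarrow> nat \<Rightarrow> (fact set \<Rightarrow> bool) \<Rightarrow> nat list set" where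
  "certain_lang Ss k l P = {w. \<exists>fs. distinct fs \<and> w = enc_db fs \<and>
       db_over Ss k (set fs) \<and> certain l P (set fs)}"

datatype move = MLeft | MRight

text \<open>States 0..<n_states (0 = halting state, 1 = start state), tape symbols
  0..<n_syms (0 = blank).\<close>
record tm =
  n_states :: nat
  n_syms :: nat
  delta :: "nat \<Rightarrow> nat \<Rightarrow> nat \<times> nat \<times> move"

definition wf_tm :: "tm \<Rightarrow> bool" where
  "wf_tm M \<longleftrightarrow> 2 \<le> n_states M \<and> 5 \<le> n_syms M \<and>
     (\<forall>q s. 0 < q \<longrightarrow> q < n_states M \<longrightarrow> s < n_syms M \<longrightarrow>
        fst (delta M q s) < n_states M \<and> fst (snd (delta M q s)) < n_syms M)"

text \<open>Configuration: (state, tape left of head reversed, tape from head on).\<close>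
type_synonym config = "nat \<times> nat list \<times> nat list"

definition tm_step :: "tm \<Rightarrow> config \<Rightarrow> config" where
  "tm_step M c = (case c of (q, ls, rs) \<Rightarrow>
     (if q = 0 then (q, ls, rs) else
      (let s = (case rs of [] \<Rightarrow> 0 | x # _ \<Rightarrow> x);
           (q', s', m) = delta M q s
       in (case m of
             MRight \<Rightarrow> (q', s' # ls, tl rs)
           | MLeft \<Rightarrow> (case ls of
                         [] \<Rightarrow> (q', [], s' # tl rs)
                       | y # ls' \<Rightarrow> (q', ls', y # s' # tl rs))))))"

definition tm_run :: "tm \<Rightarrow> nat \<Rightarrow> config \<Rightarrow> config" where
  "tm_run M t c = (tm_step M ^^ t) c"

definition tm_init :: "nat list \<Rightarrow> config" where
  "tm_init w = (1, [], w)"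

definition tm_output :: "config \<Rightarrow> nat list" where
  "tm_output c = (case c of (q, ls, rs) \<Rightarrow> takeWhile (\<lambda>s. s \<noteq> 0) (rev ls @ rs))"

definition poly_time_computable :: "(nat list \<Rightarrow> nat list) \<Rightarrow> bool" where
  "poly_time_computable f \<longleftrightarrow>
     (\<exists>M c d. wf_tm M \<and>
        (\<forall>w. set w \<subseteq> {1,2,3,4} \<longrightarrow>
           (\<exists>t. t \<le> c * (length w + 1) ^ d \<and>
                fst (tm_run M t (tm_init w)) = 0 \<and>
                tm_output (tm_run M t (tm_init w)) = f w)))"

definition poly_reduces :: "nat list set \<Rightarrow> nat list set \<Rightarrow> bool" where
  "poly_reduces L1 L2 \<longleftrightarrow>
     (\<exists>f. poly_time_computable f \<and>
        (\<forall>w. set w \<subseteq> {1,2,3,4} \<longrightarrow> (w \<in> L1 \<longleftrightarrow> f w \<in> L2)))"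

end

theory Submission
  imports Defs "HOL-Library.Countable"
begin

declare bin.simps[simp del]

lemma bin_0[simp]: "bin 0 = []" by (simp add: bin.simps)
lemma bin_pos: "n > 0 \<Longrightarrow> bin n = bin (n div 2) @ [n mod 2 + 1]"
  by (subst bin.simps) simp

lemma bin_set: "set (bin n) \<subseteq> {1,2}"
proof (induction n rule: bin.induct)
  case (1 n) thus ?case
  proof (cases "n = 0")
    case False
    have "n mod 2 = 0 \<or> n mod 2 = 1" by arith
    thus ?thesis using 1 False by (auto simp: bin_pos)
  qed simp
qed

lemma bin_hd: "n > 0 \<Longrightarrow> hd (bin n) = 2"
proof (induction n rule: bin.induct)
  case (1 n)
  show ?case
  proof (cases "n div 2 = 0")
    case True
    with 1(2) have "n = 1" by auto
    thus ?thesis by (simp add: bin_pos)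
  next
    case False
    with 1 have "bin (n div 2) \<noteq> []" "hd (bin (n div 2)) = 2" by (auto simp: bin_pos)
    thus ?thesis using 1(2) by (simp add: bin_pos)
  qed
qed

definition nob :: "nat list \<Rightarrow> nat" where
  "nob s = foldl (\<lambda>acc b. 2 * acc + (b - 1)) 0 s"

lemma nob_snoc[simp]: "nob (s @ [b]) = 2 * nob s + (b - 1)"
  by (simp add: nob_def)
lemma nob_Nil[simp]: "nob [] = 0" by (simp add: nob_def)
lemma nob_single[simp]: "nob [b] = b - 1" by (simp add: nob_def)
lemma bin_1[simp]: "bin (Suc 0) = [2]" by (simp add: bin_pos)

lemma nob_bin[simp]: "nob (bin n) = n"
proof (induction n rule: bin.induct)
  case (1 n) thus ?case by (cases "n = 0") (auto simp: bin_pos)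
qed

definition valid_bits :: "nat list \<Rightarrow> bool" where
  "valid_bits s \<longleftrightarrow> s = [] \<or> (hd s = 2 \<and> set s \<subseteq> {1,2})"

lemma bin_nob: "valid_bits s \<Longrightarrow> bin (nob s) = s"
proof (induction s rule: rev_induct)
  case Nil thus ?case by simp
next
  case (snoc b s)
  show ?case
  proof (cases "s = []")
    case True
    with snoc.prems have "b = 2" by (simp add: valid_bits_def)
    thus ?thesis using True by (simp add: bin_pos)
  next
    case False
    with snoc.prems have vs: "valid_bits s" and b: "b \<in> {1,2}"
      by (auto simp: valid_bits_def)
    with snoc.IH have e: "bin (nob s) = s" by simp
    with False have "nob s > 0" by (cases "nob s = 0") auto
    thus ?thesis using b e by (auto simp: bin_pos)
  qed
qed

lemma valid_bin: "valid_bits (bin n)"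
  using bin_set bin_hd by (cases "n = 0") (auto simp: valid_bits_def)

lemma bin_inj: "bin a = bin b \<Longrightarrow> a = b"
  by (metis nob_bin)

fun fixbits :: "nat \<Rightarrow> nat \<Rightarrow> nat list" where
  "fixbits 0 v = []"
| "fixbits (Suc M) v = fixbits M (v div 2) @ [v mod 2 + 1]"

lemma fixbits_len[simp]: "length (fixbits M v) = M"
  by (induction M arbitrary: v) auto

lemma fixbits_set: "set (fixbits M v) \<subseteq> {1,2}"
proof (induction M arbitrary: v)
  case (Suc M)
  have "v mod 2 = 0 \<or> v mod 2 = 1" by arith
  thus ?case using Suc by auto
qed simp

lemma nob_fixbits: "nob (fixbits M v) = v mod 2 ^ M"
proof (induction M arbitrary: v)
  case 0 thus ?case by simp
next
  case (Suc M)
  have "v mod 2 ^ Suc M = 2 * ((v div 2) mod 2 ^ M) + v mod 2"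
    by (simp add: mod_mult2_eq mult.commute)
  thus ?case using Suc by simp
qed

definition tag :: "nat \<Rightarrow> nat \<Rightarrow> nat list" where
  "tag M v = 2 # fixbits M v"

definition pairn :: "nat \<Rightarrow> nat \<Rightarrow> nat \<Rightarrow> nat" where
  "pairn M a v = nob (tag M v @ bin a)"

lemma bin_pairn: "bin (pairn M a v) = tag M v @ bin a"
  unfolding pairn_def
  by (rule bin_nob) (use bin_set fixbits_set in \<open>auto simp: valid_bits_def tag_def\<close>)

lemma pairn_inj:
  assumes "v < 2 ^ M" "v' < 2 ^ M" "pairn M a v = pairn M a' v'"
  shows "a = a' \<and> v = v'"
proof -
  have "tag M v @ bin a = tag M v' @ bin a'" using assms(3) bin_pairn by metis
  hence "fixbits M v = fixbits M v'" "bin a = bin a'" by (auto simp: tag_def)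
  hence "v mod 2^M = v' mod 2^M" "a = a'" using nob_fixbits bin_inj by metis+
  thus ?thesis using assms by simp
qed

section \<open>Transducer\<close>

datatype tst = F0 | Rel1 | Rel2 | Num nat nat bool

fun trans :: "nat \<Rightarrow> (nat \<Rightarrow> nat \<Rightarrow> nat list) \<Rightarrow> tst \<Rightarrow> nat \<Rightarrow> (tst \<times> nat list) option" where
  "trans k tg F0 s = (if s = 2 then Some (Rel1, []) else None)"
| "trans k tg Rel1 s = (if s = 3 then Some (Num 1 0 False, [3]) else if s = 1 then Some (Rel2, []) else None)"
| "trans k tg Rel2 s = (if s = 3 then Some (Num 2 0 False, [3]) else None)"
| "trans k tg (Num r i st) s = (if i < k then
     (if s = 3 then Some (Num r (Suc i) False, (if st then [] else tg r i) @ [3])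
      else if s = 2 then Some (Num r i True, (if st then [] else tg r i) @ [2])
      else if s = 1 \<and> st then Some (Num r i True, [1]) else None)
   else if s = 4 then Some (F0, [4]) else None)"

fun trun :: "nat \<Rightarrow> (nat \<Rightarrow> nat \<Rightarrow> nat list) \<Rightarrow> tst \<Rightarrow> nat list \<Rightarrow> (tst \<times> nat list) option" where
  "trun k tg q [] = Some (q, [])"
| "trun k tg q (s # w) = (case trans k tg q s of None \<Rightarrow> None | Some (q', ot) \<Rightarrow>
      (case trun k tg q' w of None \<Rightarrow> None | Some (q'', o') \<Rightarrow> Some (q'', ot @ o')))"

lemma trun_Cons_Some: "trun k tg q (s # w) = Some (q'', ot) \<longleftrightarrow>
   (\<exists>q' o1 o2. trans k tg q s = Some (q', o1) \<and> trun k tg q' w = Some (q'', o2) \<and> ot = o1 @ o2)"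
  by (auto split: option.splits)

lemma trun_Cons_None: "trans k tg q s = None \<Longrightarrow> trun k tg q (s # w) = None"
  by simp

lemma trun_append: "trun k tg q (u @ v) = (case trun k tg q u of None \<Rightarrow> None | Some (q', ot) \<Rightarrow>
      (case trun k tg q' v of None \<Rightarrow> None | Some (q'', o') \<Rightarrow> Some (q'', ot @ o')))"
  by (induction u arbitrary: q) (auto split: option.splits)

lemma trun_append_Some: "trun k tg q u = Some (q', ot) \<Longrightarrow> trun k tg q' v = Some (q'', o') \<Longrightarrow>
   trun k tg q (u @ v) = Some (q'', ot @ o')"
  by (simp add: trun_append)

lemma enc_nat_0[simp]: "enc_nat 0 = [3]" by (simp add: enc_nat_def)
lemma enc_nat_1[simp]: "enc_nat 1 = [2,3]" by (simp add: enc_nat_def)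
lemma enc_nat_Suc0[simp]: "enc_nat (Suc 0) = [2,3]" by (simp add: enc_nat_def)
lemma enc_nat_2[simp]: "enc_nat 2 = [2,1,3]" by (simp add: enc_nat_def bin_pos)

definition vr :: "nat list \<Rightarrow> nat list \<Rightarrow> nat \<Rightarrow> nat list" where
  "vr xs ys r = (if r = 1 then xs else ys)"

abbreviation tgf :: "nat \<Rightarrow> nat list \<Rightarrow> nat list \<Rightarrow> nat \<Rightarrow> nat \<Rightarrow> nat list" where
  "tgf M xs ys \<equiv> (\<lambda>r i. tag M (vr xs ys r ! i))"

definition gfact :: "nat \<Rightarrow> nat list \<Rightarrow> nat list \<Rightarrow> fact \<Rightarrow> fact" where
  "gfact M xs ys f = (0, map2 (pairn M) (snd f) (vr xs ys (fst f)))"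

lemma enc_nat_pairn: "enc_nat (pairn M a v) = tag M v @ bin a @ [3]"
  by (simp add: enc_nat_def bin_pairn)

lemma trun_started:
  assumes "set bs \<subseteq> {1,2}" "i < k"
  shows "trun k tg (Num r i True) (bs @ [3]) = Some (Num r (Suc i) False, bs @ [3])"
  using assms
proof (induction bs)
  case (Cons b bs)
  hence "b = 1 \<or> b = 2" by auto
  thus ?case using Cons by auto
qed simp

lemma bin_Cons: "n > 0 \<Longrightarrow> \<exists>bs. bin n = 2 # bs \<and> set bs \<subseteq> {1,2}"
  using bin_hd[of n] bin_set[of n] valid_bin[of n]
  by (cases "bin n") (auto simp: bin_pos)

lemma trun_field:
  assumes "i < k"
  shows "trun k tg (Num r i False) (enc_nat a) = Some (Num r (Suc i) False, tg r i @ bin a @ [3])"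
proof (cases "a = 0")
  case True thus ?thesis using assms by simp
next
  case False
  then obtain bs where bs: "bin a = 2 # bs" "set bs \<subseteq> {1,2}" using bin_Cons by blast
  have "trun k tg (Num r i True) (bs @ [3]) = Some (Num r (Suc i) False, bs @ [3])"
    using trun_started[OF bs(2) assms] .
  thus ?thesis using assms bs by (simp add: enc_nat_def)
qed

lemma trun_fields:
  assumes "i + length as \<le> k" "length (vr xs ys r) = k"
  shows "trun k (\<lambda>r i. tag M (vr xs ys r ! i)) (Num r i False) (concat (map enc_nat as)) =
    Some (Num r (i + length as) False, concat (map enc_nat (map2 (pairn M) as (drop i (vr xs ys r)))))"
  using assms
proof (induction as arbitrary: i)
  case Nil thus ?case by simp
next
  case (Cons a as)
  have lt: "i < k" using Cons.prems by simp
  have IH: "trun k (\<lambda>r i. tag M (vr xs ys r ! i)) (Num r (Suc i) False) (concat (map enc_nat as)) =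
    Some (Num r (Suc i + length as) False, concat (map enc_nat (map2 (pairn M) as (drop (Suc i) (vr xs ys r)))))"
    using Cons by simp
  show ?case
  proof -
    have d: "drop i (vr xs ys r) = vr xs ys r ! i # drop (Suc i) (vr xs ys r)"
      using lt Cons.prems by (simp add: Cons_nth_drop_Suc)
    show ?thesis
      using trun_append_Some[OF trun_field[OF lt] IH] Cons.prems
      by (simp add: d enc_nat_pairn)
  qed
qed

definition okfact :: "nat \<Rightarrow> fact \<Rightarrow> bool" where
  "okfact k f \<longleftrightarrow> fst f \<in> {1,2} \<and> length (snd f) = k"

lemma trun_fact:
  assumes "okfact k f" "length xs = k" "length ys = k"
  shows "trun k (tgf M xs ys) F0 (enc_fact f) = Some (F0, enc_fact (gfact M xs ys f))"
proof -
  obtain S as where f: "f = (S, as)" by (cases f)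
  have S: "S = 1 \<or> S = 2" and la: "length as = k" using assms f by (auto simp: okfact_def)
  have lv: "length (vr xs ys S) = k" using assms by (simp add: vr_def)
  have hd: "trun k (tgf M xs ys) F0 (enc_nat S) = Some (Num S 0 False, [3])"
    using S by auto
  have fl: "trun k (tgf M xs ys) (Num S 0 False) (concat (map enc_nat as)) =
    Some (Num S k False, concat (map enc_nat (map2 (pairn M) as (vr xs ys S))))"
    using trun_fields[of 0 as k xs ys S M] la lv by simp
  have tl: "trun k (tgf M xs ys) (Num S k False) [4] = Some (F0, [4])" by simp
  show ?thesis
    using trun_append_Some[OF trun_append_Some[OF hd fl] tl]
    by (simp add: f enc_fact_def gfact_def)
qed

lemma trun_db:
  assumes "\<forall>f\<in>set fs. okfact k f" "length xs = k" "length ys = k"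
  shows "trun k (tgf M xs ys) F0 (enc_db fs) = Some (F0, enc_db (map (gfact M xs ys) fs))"
  using assms
proof (induction fs)
  case Nil thus ?case by (simp add: enc_db_def)
next
  case (Cons f fs)
  thus ?case using trun_append_Some[OF trun_fact[of k f xs ys M]] by (simp add: enc_db_def)
qed

lemma back_started:
  assumes "trun k tg (Num r i True) w = Some (F0, ot)" "i < k"
  shows "\<exists>bs rest o'. set bs \<subseteq> {1,2} \<and> w = bs @ 3 # rest \<and> ot = bs @ 3 # o' \<and>
     trun k tg (Num r (Suc i) False) rest = Some (F0, o')"
  using assms
proof (induction w arbitrary: ot)
  case Nil thus ?case by simp
next
  case (Cons s w)
  then obtain q' o1 o2 where t: "trans k tg (Num r i True) s = Some (q', o1)"
    "trun k tg q' w = Some (F0, o2)" "ot = o1 @ o2" by (auto simp del: trun.simps simp: trun_Cons_Some)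
  show ?case
  proof (cases "s = 3")
    case True
    thus ?thesis using t Cons.prems by (intro exI[of _ "[]"] exI[of _ w] exI[of _ o2]) auto
  next
    case False
    with t Cons.prems have s: "s = 1 \<or> s = 2" and q': "q' = Num r i True" and o1: "o1 = [s]"
      by (auto split: if_splits)
    from Cons.IH[of o2] t q' Cons.prems obtain bs rest o' where
      "set bs \<subseteq> {1,2}" "w = bs @ 3 # rest" "o2 = bs @ 3 # o'"
      "trun k tg (Num r (Suc i) False) rest = Some (F0, o')" by auto
    thus ?thesis using s o1 t(3) by (intro exI[of _ "s # bs"] exI[of _ rest] exI[of _ o']) auto
  qed
qed

lemma back_field:
  assumes "trun k tg (Num r i False) w = Some (F0, ot)" "i < k"
  shows "\<exists>a rest o'. w = enc_nat a @ rest \<and> ot = tg r i @ bin a @ 3 # o' \<and>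
     trun k tg (Num r (Suc i) False) rest = Some (F0, o')"
proof (cases w)
  case Nil thus ?thesis using assms by simp
next
  case (Cons s w')
  have "trun k tg (Num r i False) (s # w') = Some (F0, ot)" using assms Cons by simp
  then obtain q' o1 o2 where t: "trans k tg (Num r i False) s = Some (q', o1)"
    "trun k tg q' w' = Some (F0, o2)" "ot = o1 @ o2" unfolding trun_Cons_Some by blast
  show ?thesis
  proof (cases "s = 3")
    case True
    thus ?thesis using t assms Cons by (intro exI[of _ 0]) (auto simp: enc_nat_def)
  next
    case False
    with t assms have s: "s = 2" and q': "q' = Num r i True" and o1: "o1 = tg r i @ [2]"
      by (auto split: if_splits)
    from back_started[of k tg r i w' o2] t q' assms obtain bs rest o' where
      b: "set bs \<subseteq> {1,2}" "w' = bs @ 3 # rest" "o2 = bs @ 3 # o'"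
      "trun k tg (Num r (Suc i) False) rest = Some (F0, o')" by auto
    have v: "valid_bits (2 # bs)" using b by (simp add: valid_bits_def)
    show ?thesis
      using b s o1 t(3) Cons bin_nob[OF v]
      by (intro exI[of _ "nob (2 # bs)"] exI[of _ rest] exI[of _ o']) (simp add: enc_nat_def)
  qed
qed

lemma back_fields:
  assumes "trun k (tgf M xs ys) (Num r i False) w = Some (F0, ot)" "i \<le> k" "length (vr xs ys r) = k"
  shows "\<exists>as rest o'. length as = k - i \<and> w = concat (map enc_nat as) @ 4 # rest \<and>
     ot = concat (map enc_nat (map2 (pairn M) as (drop i (vr xs ys r)))) @ 4 # o' \<and>
     trun k (tgf M xs ys) F0 rest = Some (F0, o')"
  using assms
proof (induction "k - i" arbitrary: i w ot)
  case 0
  hence i: "i = k" by simp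
  show ?case
  proof (cases w)
    case Nil thus ?thesis using 0 by simp
  next
    case (Cons s w')
    with 0 obtain q' o1 o2 where t: "trans k (tgf M xs ys) (Num r i False) s = Some (q', o1)"
      "trun k (tgf M xs ys) q' w' = Some (F0, o2)" "ot = o1 @ o2" by (auto simp del: trun.simps simp: trun_Cons_Some)
    hence "s = 4" "q' = F0" "o1 = [4]" using i by (auto split: if_splits)
    thus ?thesis using t i Cons by (intro exI[of _ "[]"] exI[of _ w'] exI[of _ o2]) auto
  qed
next
  case (Suc d)
  hence lt: "i < k" by simp
  from back_field[OF Suc.prems(1) lt] obtain a rest o' where
    f: "w = enc_nat a @ rest" "ot = tgf M xs ys r i @ bin a @ 3 # o'"
    "trun k (tgf M xs ys) (Num r (Suc i) False) rest = Some (F0, o')" by blast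
  have "\<exists>as rest' o''. length as = k - Suc i \<and> rest = concat (map enc_nat as) @ 4 # rest' \<and>
    o' = concat (map enc_nat (map2 (pairn M) as (drop (Suc i) (vr xs ys r)))) @ 4 # o'' \<and>
    trun k (tgf M xs ys) F0 rest' = Some (F0, o'')"
    by (rule Suc.hyps(1)) (use Suc.hyps(2) f(3) lt Suc.prems(3) in auto)
  then obtain as rest' o'' where
    r: "length as = k - Suc i" "rest = concat (map enc_nat as) @ 4 # rest'"
    "o' = concat (map enc_nat (map2 (pairn M) as (drop (Suc i) (vr xs ys r)))) @ 4 # o''"
    "trun k (tgf M xs ys) F0 rest' = Some (F0, o'')" by blast
  have d: "drop i (vr xs ys r) = vr xs ys r ! i # drop (Suc i) (vr xs ys r)"
    using lt Suc.prems by (simp add: Cons_nth_drop_Suc)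
  show ?case
    using r f lt
    by (intro exI[of _ "a # as"] exI[of _ rest'] exI[of _ o'']) (auto simp: d enc_nat_pairn)
qed

lemma back_fact:
  assumes "trun k (tgf M xs ys) F0 w = Some (F0, ot)" "w \<noteq> []" "length xs = k" "length ys = k"
  shows "\<exists>f rest o'. okfact k f \<and> w = enc_fact f @ rest \<and> ot = enc_fact (gfact M xs ys f) @ o' \<and>
     trun k (tgf M xs ys) F0 rest = Some (F0, o')"
proof -
  obtain s1 w1 where w: "w = s1 # w1" using assms(2) by (cases w) auto
  from assms(1) w obtain q1 o1 o2 where t1: "trans k (tgf M xs ys) F0 s1 = Some (q1, o1)"
    "trun k (tgf M xs ys) q1 w1 = Some (F0, o2)" "ot = o1 @ o2" by (auto simp del: trun.simps simp: trun_Cons_Some)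
  hence s1: "s1 = 2" "q1 = Rel1" "o1 = []" by (auto split: if_splits)
  obtain s2 w2 where w1: "w1 = s2 # w2" using t1(2) s1 by (cases w1) auto
  from t1(2) s1 w1 obtain q2 o3 o4 where t2: "trans k (tgf M xs ys) Rel1 s2 = Some (q2, o3)"
    "trun k (tgf M xs ys) q2 w2 = Some (F0, o4)" "o2 = o3 @ o4" by (auto simp del: trun.simps simp: trun_Cons_Some)
  have main: "\<exists>f rest o'. okfact k f \<and> w = enc_fact f @ rest \<and> ot = enc_fact (gfact M xs ys f) @ o' \<and>
     trun k (tgf M xs ys) F0 rest = Some (F0, o')"
    if S: "S \<in> {1,2}" and wS: "w = enc_nat S @ u" and oS: "ot = [3] @ o5"
      and tu: "trun k (tgf M xs ys) (Num S 0 False) u = Some (F0, o5)" for S u o5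
  proof -
    have lv: "length (vr xs ys S) = k" using assms by (simp add: vr_def)
    from back_fields[OF tu _ lv] obtain as rest o' where
      b: "length as = k" "u = concat (map enc_nat as) @ 4 # rest"
      "o5 = concat (map enc_nat (map2 (pairn M) as (vr xs ys S))) @ 4 # o'"
      "trun k (tgf M xs ys) F0 rest = Some (F0, o')" by auto
    show ?thesis using b S wS oS
      by (intro exI[of _ "(S, as)"] exI[of _ rest] exI[of _ o'])
         (auto simp: okfact_def enc_fact_def gfact_def)
  qed
  show ?thesis
  proof (cases "s2 = 3")
    case True
    hence "q2 = Num 1 0 False" "o3 = [3]" using t2 by auto
    thus ?thesis using main[of 1 w2 o4] True t2 t1 s1 w w1 by simp
  next
    case False
    hence s2: "s2 = 1" "q2 = Rel2" "o3 = []" using t2 by (auto split: if_splits)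
    obtain s3 w3 where w2: "w2 = s3 # w3" using t2(2) s2 by (cases w2) auto
    from t2(2) s2 w2 obtain q3 o6 o7 where t3: "trans k (tgf M xs ys) Rel2 s3 = Some (q3, o6)"
      "trun k (tgf M xs ys) q3 w3 = Some (F0, o7)" "o4 = o6 @ o7" by (auto simp del: trun.simps simp: trun_Cons_Some)
    hence "s3 = 3" "q3 = Num 2 0 False" "o6 = [3]" by (auto split: if_splits)
    thus ?thesis using main[of 2 w3 o7] t3 t2 s2 t1 s1 w w1 w2 by simp
  qed
qed

lemma back_db:
  assumes "trun k (tgf M xs ys) F0 w = Some (F0, ot)" "length xs = k" "length ys = k"
  shows "\<exists>fs. (\<forall>f\<in>set fs. okfact k f) \<and> w = enc_db fs \<and> ot = enc_db (map (gfact M xs ys) fs)"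
  using assms
proof (induction "length w" arbitrary: w ot rule: less_induct)
  case less
  show ?case
  proof (cases "w = []")
    case True thus ?thesis using less.prems by (intro exI[of _ "[]"]) (simp add: enc_db_def)
  next
    case False
    from back_fact[OF less.prems(1) False less.prems(2,3)] obtain f rest o' where
      f: "okfact k f" "w = enc_fact f @ rest" "ot = enc_fact (gfact M xs ys f) @ o'"
      "trun k (tgf M xs ys) F0 rest = Some (F0, o')" by blast
    have "length rest < length w" using f(2) by (simp add: enc_fact_def)
    from less.hyps[OF this f(4) less.prems(2,3)] obtain fs where
      "\<forall>f\<in>set fs. okfact k f" "rest = enc_db fs" "o' = enc_db (map (gfact M xs ys) fs)" by blast
    thus ?thesis using f by (intro exI[of _ "f # fs"]) (simp add: enc_db_def)
  qed
qed

section \<open>Injectivity of the encoding\<close>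

lemma split3: "3 \<notin> set p \<Longrightarrow> 3 \<notin> set p' \<Longrightarrow> p @ 3 # X = p' @ 3 # Y \<Longrightarrow> p = p' \<and> X = Y"
proof (induction p arbitrary: p')
  case Nil thus ?case by (cases p') auto
next
  case (Cons a p) thus ?case by (cases p') auto
qed

lemma bin_no3: "3 \<notin> set (bin n)" using bin_set[of n] by auto
lemma bin_no4: "4 \<notin> set (bin n)" using bin_set[of n] by auto

lemma enc_nat_app_inj: "enc_nat a @ X = enc_nat b @ Y \<Longrightarrow> a = b \<and> X = Y"
  using split3[of "bin a" "bin b" X Y] bin_no3 bin_inj by (auto simp: enc_nat_def)

lemma enc_nat_hd: "\<exists>c cs. enc_nat a = c # cs \<and> c \<noteq> 4"
  using bin_no4[of a] by (cases "bin a") (auto simp: enc_nat_def)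

lemma enc_nats_4: "concat (map enc_nat as) @ 4 # u = concat (map enc_nat bs) @ 4 # u' \<Longrightarrow> as = bs \<and> u = u'"
proof (induction as arbitrary: bs)
  case Nil
  show ?case
  proof (cases bs)
    case (Cons b bs')
    obtain c cs where "enc_nat b = c # cs" "c \<noteq> 4" using enc_nat_hd by blast
    thus ?thesis using Nil Cons by simp
  qed (use Nil in simp)
next
  case (Cons a as)
  show ?case
  proof (cases bs)
    case Nil
    obtain c cs where "enc_nat a = c # cs" "c \<noteq> 4" using enc_nat_hd by blast
    thus ?thesis using Cons.prems Nil by simp
  next
    case (Cons b bs')
    with Cons.prems have "enc_nat a @ (concat (map enc_nat as) @ 4 # u) = enc_nat b @ (concat (map enc_nat bs') @ 4 # u')"
      by simp
    from enc_nat_app_inj[OF this] have ab: "a = b"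
      and r: "concat (map enc_nat as) @ 4 # u = concat (map enc_nat bs') @ 4 # u'" by auto
    from Cons.IH[OF r] ab Cons show ?thesis by simp
  qed
qed

lemma enc_fact_app_inj: "enc_fact f @ u = enc_fact f' @ u' \<Longrightarrow> f = f' \<and> u = u'"
proof -
  assume a: "enc_fact f @ u = enc_fact f' @ u'"
  obtain S as where f: "f = (S, as)" by (cases f)
  obtain S' as' where f': "f' = (S', as')" by (cases f')
  from a have "enc_nat S @ (concat (map enc_nat as) @ 4 # u) = enc_nat S' @ (concat (map enc_nat as') @ 4 # u')"
    by (simp add: f f' enc_fact_def)
  from enc_nat_app_inj[OF this] have "S = S'" "concat (map enc_nat as) @ 4 # u = concat (map enc_nat as') @ 4 # u'"
    by auto
  moreover from enc_nats_4[OF this(2)] have "as = as'" "u = u'" by auto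
  ultimately show ?thesis by (simp add: f f')
qed

lemma enc_fact_ne: "enc_fact f \<noteq> []" by (simp add: enc_fact_def)

lemma enc_db_inj: "enc_db fs = enc_db fs' \<Longrightarrow> fs = fs'"
proof (induction fs arbitrary: fs')
  case Nil thus ?case using enc_fact_ne by (cases fs') (auto simp: enc_db_def)
next
  case (Cons f fs)
  show ?case
  proof (cases fs')
    case Nil thus ?thesis using Cons.prems enc_fact_ne by (simp add: enc_db_def)
  next
    case (Cons f' fs'')
    with Cons.prems have "enc_fact f @ enc_db fs = enc_fact f' @ enc_db fs''" by (simp add: enc_db_def)
    from enc_fact_app_inj[OF this] have "f = f'" and r: "enc_db fs = enc_db fs''" by auto
    with Cons.IH[OF r] Cons show ?thesis by simp
  qed
qed

section \<open>Repairs under a key-preserving injection\<close>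

lemma consistent_image:
  assumes inj: "inj_on h D" and ke: "\<forall>f1\<in>D. \<forall>f2\<in>D. key_equal l (h f1) (h f2) = key_equal l f1 f2"
    and r: "r \<subseteq> D"
  shows "consistent l (h ` r) \<longleftrightarrow> consistent l r"
proof
  assume c: "consistent l (h ` r)"
  show "consistent l r" unfolding consistent_def
  proof (intro ballI impI)
    fix f g assume "f \<in> r" "g \<in> r" "key_equal l f g"
    hence "h f = h g" using c ke r unfolding consistent_def by blast
    thus "f = g" using inj r \<open>f \<in> r\<close> \<open>g \<in> r\<close> by (auto dest: inj_onD)
  qed
next
  assume c: "consistent l r"
  show "consistent l (h ` r)" unfolding consistent_def
  proof (intro ballI impI)
    fix f g assume "f \<in> h ` r" "g \<in> h ` r" "key_equal l f g"
    then obtain f0 g0 where "f0 \<in> r" "g0 \<in> r" "f = h f0" "g = h g0" "key_equal l (h f0) (h g0)" by auto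
    thus "f = g" using c ke r unfolding consistent_def by blast
  qed
qed

lemma certain_image:
  assumes inj: "inj_on h D" and ke: "\<forall>f1\<in>D. \<forall>f2\<in>D. key_equal l (h f1) (h f2) = key_equal l f1 f2"
  shows "certain l P (h ` D) \<longleftrightarrow> (\<forall>r. is_repair l D r \<longrightarrow> P (h ` r))"
proof -
  have fwd: "is_repair l (h ` D) (h ` r)" if rr: "is_repair l D r" for r
  proof -
    have rD: "r \<subseteq> D" and cr: "consistent l r" and mx: "\<forall>r'. r \<subseteq> r' \<longrightarrow> r' \<subseteq> D \<longrightarrow> consistent l r' \<longrightarrow> r' = r"
      using rr by (auto simp: is_repair_def)
    have "h ` r \<subseteq> h ` D" using rD by auto
    moreover have "consistent l (h ` r)" using consistent_image[OF inj ke rD] cr by simp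
    moreover have "r'' = h ` r" if "h ` r \<subseteq> r''" "r'' \<subseteq> h ` D" "consistent l r''" for r''
    proof -
      let ?r0 = "D \<inter> h -` r''"
      have e: "h ` ?r0 = r''" using that(2) by auto
      have "r \<subseteq> ?r0" using that(1) rD by auto
      moreover have "consistent l ?r0" using consistent_image[OF inj ke, of ?r0] e that(3) by auto
      ultimately have "?r0 = r" using mx by auto
      thus ?thesis using e by auto
    qed
    ultimately show ?thesis by (auto simp: is_repair_def)
  qed
  have bwd: "\<exists>r. is_repair l D r \<and> r' = h ` r" if rr: "is_repair l (h ` D) r'" for r'
  proof -
    have rD: "r' \<subseteq> h ` D" and cr: "consistent l r'"
      and mx: "\<forall>r''. r' \<subseteq> r'' \<longrightarrow> r'' \<subseteq> h ` D \<longrightarrow> consistent l r'' \<longrightarrow> r'' = r'"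
      using rr by (auto simp: is_repair_def)
    let ?r = "D \<inter> h -` r'"
    have e: "h ` ?r = r'" using rD by auto
    have c: "consistent l ?r" using consistent_image[OF inj ke, of ?r] e cr by auto
    have "r0 = ?r" if "?r \<subseteq> r0" "r0 \<subseteq> D" "consistent l r0" for r0
    proof -
      have "r' \<subseteq> h ` r0" using e that(1) by auto
      moreover have "h ` r0 \<subseteq> h ` D" using that(2) by auto
      moreover have "consistent l (h ` r0)" using consistent_image[OF inj ke that(2)] that(3) by simp
      ultimately have "h ` r0 = r'" using mx by auto
      thus ?thesis using that by auto
    qed
    thus ?thesis using c e by (intro exI[of _ ?r]) (auto simp: is_repair_def)
  qed
  show ?thesis unfolding certain_def using fwd bwd by blast
qed

definition up1 :: "nat \<Rightarrow> nat \<Rightarrow> nat" where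
  "up1 M z = (SOME a. \<exists>v<2^M. z = pairn M a v)"
definition up2 :: "nat \<Rightarrow> nat \<Rightarrow> nat" where
  "up2 M z = (SOME v. v < 2^M \<and> (\<exists>a. z = pairn M a v))"

lemma up1_pairn: assumes "v < 2^M" shows "up1 M (pairn M a v) = a"
  unfolding up1_def
proof (rule some_equality)
  show "\<exists>v'<2^M. pairn M a v = pairn M a v'" using assms by blast
next
  fix a' assume "\<exists>v'<2^M. pairn M a v = pairn M a' v'"
  then obtain v' where h: "v' < 2^M" "pairn M a v = pairn M a' v'" by blast
  show "a' = a" using pairn_inj[OF assms h(1) h(2)] by simp
qed

lemma up2_pairn: assumes "v < 2^M" shows "up2 M (pairn M a v) = v"
  unfolding up2_def
proof (rule some_equality)
  show "v < 2^M \<and> (\<exists>a'. pairn M a v = pairn M a' v)" using assms by blast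
next
  fix v' assume "v' < 2^M \<and> (\<exists>a'. pairn M a v = pairn M a' v')"
  then obtain a' where h: "v' < 2^M" "pairn M a v = pairn M a' v'" by blast
  show "v' = v" using pairn_inj[OF assms h(1) h(2)] by simp
qed

locale gsetup =
  fixes k l :: nat and xs ys :: "nat list" and M :: nat
  assumes lx: "length xs = k" and ly: "length ys = k" and lk: "l \<le> k"
    and kd: "take l xs \<noteq> take l ys"
    and vb: "\<forall>v \<in> set xs \<union> set ys. v < 2^M"
begin

abbreviation g where "g \<equiv> gfact M xs ys"

lemma vr_len: "length (vr xs ys S) = k" using lx ly by (simp add: vr_def)

lemma vr_lt: "i < k \<Longrightarrow> vr xs ys S ! i < 2^M"
  using vb lx ly by (auto simp: vr_def)

lemma g_len: "okfact k f \<Longrightarrow> length (snd (g f)) = k"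
  by (simp add: gfact_def okfact_def vr_len)

lemma g_nth: "okfact k f \<Longrightarrow> i < k \<Longrightarrow> snd (g f) ! i = pairn M (snd f ! i) (vr xs ys (fst f) ! i)"
  by (simp add: gfact_def okfact_def vr_len)

lemma vr_eq:
  assumes "fst f1 \<in> {1,2}" "fst f2 \<in> {1,2}" "take l (vr xs ys (fst f1)) = take l (vr xs ys (fst f2))"
  shows "fst f1 = fst f2"
  using assms kd by (auto simp: vr_def split: if_splits)

lemma take_g:
  assumes "okfact k f1" "okfact k f2" "j \<le> k" "take j (snd (g f1)) = take j (snd (g f2))"
  shows "take j (snd f1) = take j (snd f2) \<and> take j (vr xs ys (fst f1)) = take j (vr xs ys (fst f2))"
proof -
  have e: "snd f1 ! i = snd f2 ! i \<and> vr xs ys (fst f1) ! i = vr xs ys (fst f2) ! i" if "i < j" for i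
  proof -
    have "take j (snd (g f1)) ! i = take j (snd (g f2)) ! i" using assms(4) by simp
    hence "snd (g f1) ! i = snd (g f2) ! i" using that by simp
    hence "pairn M (snd f1 ! i) (vr xs ys (fst f1) ! i) = pairn M (snd f2 ! i) (vr xs ys (fst f2) ! i)"
      using g_nth assms that by auto
    thus ?thesis using pairn_inj vr_lt that assms(3) by (meson order_less_le_trans)
  qed
  have l1: "length (snd f1) = k" "length (snd f2) = k" using assms by (auto simp: okfact_def)
  show ?thesis
    by (rule conjI; rule nth_equalityI) (use e l1 assms(3) vr_len in auto)
qed

lemma take_g_eq: "take j (snd (g f)) = map2 (pairn M) (take j (snd f)) (take j (vr xs ys (fst f)))"
  by (simp add: gfact_def take_map take_zip)

lemma key_g:
  assumes "okfact k f1" "okfact k f2"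
  shows "key_equal l (g f1) (g f2) \<longleftrightarrow> key_equal l f1 f2"
proof
  assume "key_equal l (g f1) (g f2)"
  hence "take l (snd (g f1)) = take l (snd (g f2))" by (simp add: key_equal_def key_tuple_def)
  from take_g[OF assms lk this] have t: "take l (snd f1) = take l (snd f2)"
    and v: "take l (vr xs ys (fst f1)) = take l (vr xs ys (fst f2))" by auto
  have "fst f1 = fst f2" by (rule vr_eq) (use assms v in \<open>auto simp: okfact_def\<close>)
  thus "key_equal l f1 f2" using t by (simp add: key_equal_def key_tuple_def)
next
  assume "key_equal l f1 f2"
  hence "fst f1 = fst f2" "take l (snd f1) = take l (snd f2)" by (auto simp: key_equal_def key_tuple_def)
  hence "take l (snd (g f1)) = take l (snd (g f2))" by (simp only: take_g_eq)
  thus "key_equal l (g f1) (g f2)"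
    by (simp add: key_equal_def key_tuple_def gfact_def)
qed

lemma inj_g: "inj_on g {f. okfact k f}"
proof (rule inj_onI)
  fix f1 f2 assume a: "f1 \<in> {f. okfact k f}" "f2 \<in> {f. okfact k f}" "g f1 = g f2"
  hence o: "okfact k f1" "okfact k f2" by auto
  have "take k (snd (g f1)) = take k (snd (g f2))" using a by simp
  from take_g[OF o order_refl this] have s: "take k (snd f1) = take k (snd f2)"
    and v: "take k (vr xs ys (fst f1)) = take k (vr xs ys (fst f2))" by auto
  have s2: "snd f1 = snd f2" using s o by (simp add: okfact_def)
  have "take l (take k (vr xs ys (fst f1))) = take l (take k (vr xs ys (fst f2)))" using v by simp
  hence "take l (vr xs ys (fst f1)) = take l (vr xs ys (fst f2))" using lk by (simp add: min_def)
  hence "fst f1 = fst f2" by (rule vr_eq[rotated 2]) (use o in \<open>auto simp: okfact_def\<close>)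
  thus "f1 = f2" using s2 by (simp add: prod_eq_iff)
qed

end

lemma map2_map_self: "map2 f (map \<mu> zs) zs = map (\<lambda>v. f (\<mu> v) v) zs"
  by (induction zs) auto

lemma equiv_single:
  assumes "map h xs = zs" "map h ys = zs" "zs = xs \<or> zs = ys"
  shows "sat2 (relR, xs) (relR, ys) D \<longleftrightarrow> sat1 (relR, zs) D"
proof
  assume "sat2 (relR, xs) (relR, ys) D"
  thus "sat1 (relR, zs) D" using assms(3) unfolding sat2_def sat1_def by auto
next
  assume "sat1 (relR, zs) D"
  then obtain \<nu> where n: "(relR, map \<nu> zs) \<in> D" unfolding sat1_def by auto
  have "map (\<nu> \<circ> h) xs = map \<nu> zs" "map (\<nu> \<circ> h) ys = map \<nu> zs"
    using assms(1,2) by (metis map_map)+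
  thus "sat2 (relR, xs) (relR, ys) D" unfolding sat2_def using n
    by (intro exI[of _ "\<nu> \<circ> h"]) simp
qed

context gsetup
begin

lemma decomp:
  assumes "okfact k f" "g f = (0, map \<mu>' zs)" "length zs = k"
  shows "map (up2 M \<circ> \<mu>') zs = vr xs ys (fst f) \<and> map (up1 M \<circ> \<mu>') zs = snd f"
proof -
  have e: "\<mu>' (zs ! i) = pairn M (snd f ! i) (vr xs ys (fst f) ! i)" if "i < k" for i
  proof -
    have "\<mu>' (zs ! i) = snd (g f) ! i" using assms(2,3) that by simp
    thus ?thesis using g_nth[OF assms(1) that] by simp
  qed
  have l: "length (snd f) = k" using assms(1) by (simp add: okfact_def)
  have a: "map (up2 M \<circ> \<mu>') zs = vr xs ys (fst f)"
  proof (rule nth_equalityI)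
    show "length (map (up2 M \<circ> \<mu>') zs) = length (vr xs ys (fst f))" using assms(3) vr_len by simp
    fix i assume "i < length (map (up2 M \<circ> \<mu>') zs)"
    hence i: "i < k" using assms(3) by simp
    show "map (up2 M \<circ> \<mu>') zs ! i = vr xs ys (fst f) ! i"
      using e[OF i] up2_pairn[OF vr_lt[OF i]] i assms(3) by simp
  qed
  have b: "map (up1 M \<circ> \<mu>') zs = snd f"
  proof (rule nth_equalityI)
    show "length (map (up1 M \<circ> \<mu>') zs) = length (snd f)" using assms(3) l by simp
    fix i assume "i < length (map (up1 M \<circ> \<mu>') zs)"
    hence i: "i < k" using assms(3) by simp
    show "map (up1 M \<circ> \<mu>') zs ! i = snd f ! i"
      using e[OF i] up1_pairn[OF vr_lt[OF i]] i assms(3) by simp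
  qed
  show ?thesis using a b by simp
qed

lemma sat_g:
  assumes sa: "standing_assumption k l xs ys" and D: "\<forall>f\<in>r. okfact k f"
  shows "sat2 (relR, xs) (relR, ys) (g ` r) \<longleftrightarrow> sat2 (relR1, xs) (relR2, ys) r"
proof
  assume "sat2 (relR1, xs) (relR2, ys) r"
  then obtain \<mu> where m: "(1, map \<mu> xs) \<in> r" "(2, map \<mu> ys) \<in> r"
    unfolding sat2_def relR1_def relR2_def by auto
  have e1: "g (1, map \<mu> xs) = (0, map (\<lambda>v. pairn M (\<mu> v) v) xs)"
    by (simp add: gfact_def vr_def map2_map_self)
  have e2: "g (2, map \<mu> ys) = (0, map (\<lambda>v. pairn M (\<mu> v) v) ys)"
    by (simp add: gfact_def vr_def map2_map_self)
  have i1: "(0, map (\<lambda>v. pairn M (\<mu> v) v) xs) \<in> g ` r" using imageI[OF m(1), of g] e1 by simp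
  have i2: "(0, map (\<lambda>v. pairn M (\<mu> v) v) ys) \<in> g ` r" using imageI[OF m(2), of g] e2 by simp
  show "sat2 (relR, xs) (relR, ys) (g ` r)" unfolding sat2_def relR_def
    using i1 i2 by (intro exI[of _ "\<lambda>v. pairn M (\<mu> v) v"]) simp
next
  assume "sat2 (relR, xs) (relR, ys) (g ` r)"
  then obtain \<mu>' where A: "(0, map \<mu>' xs) \<in> g ` r" and B: "(0, map \<mu>' ys) \<in> g ` r"
    unfolding sat2_def relR_def by auto
  from A obtain f1 where f1: "f1 \<in> r" "(0, map \<mu>' xs) = g f1" by (rule imageE)
  from B obtain f2 where f2: "f2 \<in> r" "(0, map \<mu>' ys) = g f2" by (rule imageE)
  have o: "okfact k f1" "okfact k f2" using f1 f2 D by auto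
  define h where "h = up2 M \<circ> \<mu>'"
  define \<nu> where "\<nu> = up1 M \<circ> \<mu>'"
  have d1: "map h xs = vr xs ys (fst f1)" "map \<nu> xs = snd f1"
    using decomp[OF o(1) f1(2)[symmetric] lx] unfolding h_def \<nu>_def by auto
  have d2: "map h ys = vr xs ys (fst f2)" "map \<nu> ys = snd f2"
    using decomp[OF o(2) f2(2)[symmetric] ly] unfolding h_def \<nu>_def by auto
  have S: "fst f1 = 1 \<or> fst f1 = 2" "fst f2 = 1 \<or> fst f2 = 2" using o by (auto simp: okfact_def)
  from sa[unfolded standing_assumption_def] have nB: "\<not> (\<exists>zs. length zs = k \<and>
          (\<forall>D. db_over {relR} k D \<and> consistent l D \<longrightarrow>
               (sat2 (relR, xs) (relR, ys) D \<longleftrightarrow> sat1 (relR, zs) D)))" by (rule conjunct2)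
  have noeq: False if "map h xs = zs" "map h ys = zs" "zs = xs \<or> zs = ys" for zs
  proof -
    have "length zs = k" using that lx ly by auto
    moreover have "\<forall>D. db_over {relR} k D \<and> consistent l D \<longrightarrow>
               (sat2 (relR, xs) (relR, ys) D \<longleftrightarrow> sat1 (relR, zs) D)"
      using equiv_single[OF that] by simp
    ultimately show False using nB by blast
  qed
  have vr1: "vr xs ys 1 = xs" and vr2: "vr xs ys 2 = ys" by (simp_all add: vr_def)
  show "sat2 (relR1, xs) (relR2, ys) r"
  proof (cases "fst f1 = 1")
    case True
    show ?thesis
    proof (cases "fst f2 = 1")
      case True
      have "map h xs = xs" "map h ys = xs" using d1(1) d2(1) True \<open>fst f1 = 1\<close> vr1 by simp_all
      thus ?thesis using noeq[of xs] by simp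
    next
      case False
      hence "fst f2 = 2" using S by auto
      have "f1 = (1, map \<nu> xs)" by (rule prod_eqI) (simp_all add: d1(2) True)
      moreover have "f2 = (2, map \<nu> ys)" by (rule prod_eqI) (simp_all add: d2(2) \<open>fst f2 = 2\<close>)
      ultimately show ?thesis unfolding sat2_def relR1_def relR2_def using f1(1) f2(1)
        by (intro exI[of _ \<nu>]) simp
    qed
  next
    case False
    hence f12: "fst f1 = 2" using S by auto
    show ?thesis
    proof (cases "fst f2 = 1")
      case False
      hence "fst f2 = 2" using S by auto
      have "map h xs = ys" "map h ys = ys" using d1(1) d2(1) \<open>fst f2 = 2\<close> f12 vr2 by simp_all
      thus ?thesis using noeq[of ys] by simp
    next
      case True
      have hx: "map h xs = ys" and hy: "map h ys = xs" using d1(1) d2(1) True f12 vr1 vr2 by simp_all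
      have m1: "map (\<nu> \<circ> h) xs = snd f2" using hx d2(2) by (simp only: map_map[symmetric])
      have m2: "map (\<nu> \<circ> h) ys = snd f1" using hy d1(2) by (simp only: map_map[symmetric])
      have "f2 = (1, map (\<nu> \<circ> h) xs)" by (rule prod_eqI) (simp_all add: m1 True)
      moreover have "f1 = (2, map (\<nu> \<circ> h) ys)" by (rule prod_eqI) (simp_all add: m2 f12)
      ultimately show ?thesis unfolding sat2_def relR1_def relR2_def using f1(1) f2(1)
        by (intro exI[of _ "\<nu> \<circ> h"]) simp
    qed
  qed
qed

end

definition Ff :: "nat \<Rightarrow> (nat \<Rightarrow> nat \<Rightarrow> nat list) \<Rightarrow> nat list \<Rightarrow> nat list" where
  "Ff k tg w = (case trun k tg F0 w of Some (q, ot) \<Rightarrow> if q = F0 then ot else [] | None \<Rightarrow> [])"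

lemma not_certain_empty: "\<not> certain l (sat2 A B) {}"
proof -
  have "is_repair l {} {}" by (simp add: is_repair_def consistent_def)
  moreover have "\<not> sat2 A B {}" by (simp add: sat2_def)
  ultimately show ?thesis by (auto simp: certain_def)
qed

lemma empty_notin: "[] \<notin> certain_lang Ss k l (sat2 A B)"
proof
  assume "[] \<in> certain_lang Ss k l (sat2 A B)"
  then obtain fs where "[] = enc_db fs" "certain l (sat2 A B) (set fs)" by (auto simp: certain_lang_def)
  moreover have "enc_db [] = []" by (simp add: enc_db_def)
  ultimately have "fs = []" using enc_db_inj by metis
  thus False using \<open>certain l (sat2 A B) (set fs)\<close> not_certain_empty by simp
qed

context gsetup
begin

lemma certain_g:
  assumes sa: "standing_assumption k l xs ys" and D: "\<forall>f\<in>D. okfact k f"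
  shows "certain l (sat2 (relR, xs) (relR, ys)) (g ` D) \<longleftrightarrow> certain l (sat2 (relR1, xs) (relR2, ys)) D"
proof -
  have inj: "inj_on g D" using inj_g D by (meson inj_on_subset mem_Collect_eq subsetI)
  have ke: "\<forall>f1\<in>D. \<forall>f2\<in>D. key_equal l (g f1) (g f2) = key_equal l f1 f2" using key_g D by blast
  have "certain l (sat2 (relR, xs) (relR, ys)) (g ` D) \<longleftrightarrow>
        (\<forall>r. is_repair l D r \<longrightarrow> sat2 (relR, xs) (relR, ys) (g ` r))"
    by (rule certain_image[OF inj ke])
  also have "\<dots> \<longleftrightarrow> (\<forall>r. is_repair l D r \<longrightarrow> sat2 (relR1, xs) (relR2, ys) r)"
  proof -
    have "sat2 (relR, xs) (relR, ys) (g ` r) \<longleftrightarrow> sat2 (relR1, xs) (relR2, ys) r" if "is_repair l D r" for r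
      by (rule sat_g[OF sa]) (use that D in \<open>auto simp: is_repair_def\<close>)
    thus ?thesis by blast
  qed
  finally show ?thesis by (simp add: certain_def)
qed

lemma red_correct:
  assumes sa: "standing_assumption k l xs ys"
  shows "w \<in> certain_lang {relR1, relR2} k l (sat2 (relR1, xs) (relR2, ys)) \<longleftrightarrow>
         Ff k (tgf M xs ys) w \<in> certain_lang {relR} k l (sat2 (relR, xs) (relR, ys))"
proof
  assume "w \<in> certain_lang {relR1, relR2} k l (sat2 (relR1, xs) (relR2, ys))"
  then obtain fs where fs: "distinct fs" "w = enc_db fs" "db_over {relR1, relR2} k (set fs)"
    "certain l (sat2 (relR1, xs) (relR2, ys)) (set fs)" by (auto simp: certain_lang_def)
  have ok: "\<forall>f\<in>set fs. okfact k f" using fs(3) by (auto simp: db_over_def okfact_def relR1_def relR2_def)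
  have F: "Ff k (tgf M xs ys) w = enc_db (map g fs)"
    using trun_db[OF ok lx ly, of M] fs(2) by (simp add: Ff_def)
  have inj: "inj_on g (set fs)" using inj_g ok by (meson inj_on_subset mem_Collect_eq subsetI)
  have "distinct (map g fs)" using fs(1) inj by (simp add: distinct_map)
  moreover have "db_over {relR} k (set (map g fs))"
    using ok g_len by (auto simp: db_over_def gfact_def relR_def)
  moreover have "certain l (sat2 (relR, xs) (relR, ys)) (set (map g fs))"
    using certain_g[OF sa ok] fs(4) by simp
  ultimately show "Ff k (tgf M xs ys) w \<in> certain_lang {relR} k l (sat2 (relR, xs) (relR, ys))"
    unfolding certain_lang_def using F by blast
next
  assume a: "Ff k (tgf M xs ys) w \<in> certain_lang {relR} k l (sat2 (relR, xs) (relR, ys))"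
  then obtain fs' where fs': "distinct fs'" "Ff k (tgf M xs ys) w = enc_db fs'"
    "certain l (sat2 (relR, xs) (relR, ys)) (set fs')" by (auto simp: certain_lang_def)
  obtain ot where t: "trun k (tgf M xs ys) F0 w = Some (F0, ot)"
  proof (cases "trun k (tgf M xs ys) F0 w")
    case None
    hence "Ff k (tgf M xs ys) w = []" by (simp add: Ff_def)
    thus ?thesis using a empty_notin by metis
  next
    case (Some p)
    obtain q ot where p: "p = (q, ot)" by (cases p)
    show ?thesis
    proof (cases "q = F0")
      case True thus ?thesis using that Some p by simp
    next
      case False
      hence "Ff k (tgf M xs ys) w = []" using Some p by (simp add: Ff_def)
      thus ?thesis using a empty_notin by metis
    qed
  qed
  from back_db[OF t lx ly] obtain fs where fs: "\<forall>f\<in>set fs. okfact k f" "w = enc_db fs"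
    "ot = enc_db (map g fs)" by blast
  have "Ff k (tgf M xs ys) w = ot" using t by (simp add: Ff_def)
  hence "fs' = map g fs" using fs(3) fs'(2) enc_db_inj by metis
  hence "distinct fs" using fs'(1) by (simp add: distinct_map)
  moreover have "db_over {relR1, relR2} k (set fs)"
    using fs(1) by (auto simp: db_over_def okfact_def relR1_def relR2_def)
  moreover have "certain l (sat2 (relR1, xs) (relR2, ys)) (set fs)"
    using certain_g[OF sa fs(1)] fs'(3) \<open>fs' = map g fs\<close> by simp
  ultimately show "w \<in> certain_lang {relR1, relR2} k l (sat2 (relR1, xs) (relR2, ys))"
    unfolding certain_lang_def using fs(2) by blast
qed

end

section \<open>Abstract machine\<close>

datatype ast = Halt | Cons tst bool | GoR tst nat bool | Wr tst nat nat | GoL tst | RejL | Seek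
  | Carry nat | Put nat | Fin | Term

definition wra :: "nat \<Rightarrow> (nat \<Rightarrow> nat \<Rightarrow> nat list) \<Rightarrow> tst \<Rightarrow> nat \<Rightarrow> nat \<Rightarrow> ast \<times> nat \<times> move" where
  "wra k tg q s j = (case trans k tg q s of
      Some (q', ot) \<Rightarrow> if j < length ot then (Wr q s (Suc j), ot ! j, MRight) else (GoL q', 0, MLeft)
    | None \<Rightarrow> (Halt, 0, MRight))"

fun ad :: "nat \<Rightarrow> (nat \<Rightarrow> nat \<Rightarrow> nat list) \<Rightarrow> ast \<Rightarrow> nat \<Rightarrow> ast \<times> nat \<times> move" where
  "ad k tg Halt s = (Halt, s, MRight)"
| "ad k tg (Cons q b) s = (if b then
     (if s \<in> {1,2,3,4} then (case trans k tg q s of None \<Rightarrow> (Halt, 0, MRight) | Some _ \<Rightarrow> (GoR q s True, 7, MRight))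
      else (Halt, 0, MRight))
   else (if s \<in> {1,2,3,4} then (case trans k tg q s of None \<Rightarrow> (RejL, 6, MLeft) | Some _ \<Rightarrow> (GoR q s False, 6, MRight))
         else if s = 5 then (if q = F0 then (Seek, 6, MRight) else (RejL, 5, MLeft)) else (Halt, s, MRight)))"
| "ad k tg (GoR q s b) c = (if c = 0 then (if b then (Wr q s 0, 5, MRight) else wra k tg q s 0) else (GoR q s b, c, MRight))"
| "ad k tg (Wr q s j) c = wra k tg q s j"
| "ad k tg (GoL q) c = (if c = 6 \<or> c = 7 then (Cons q False, c, MRight) else (GoL q, c, MLeft))"
| "ad k tg RejL c = (if c = 7 then (Halt, 0, MRight) else (RejL, c, MLeft))"
| "ad k tg Seek c = (if c = 6 then (Seek, 6, MRight) else if c = 0 then (Fin, 0, MLeft)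
     else if c \<in> {1,2,3,4} then (Carry c, 6, MLeft) else (Halt, c, MRight))"
| "ad k tg (Carry c) x = (if x = 6 then (Carry c, 6, MLeft) else if x = 7 then (Seek, c, MRight) else (Put c, x, MRight))"
| "ad k tg (Put c) x = (Seek, c, MRight)"
| "ad k tg Fin x = (if x = 6 then (Fin, 6, MLeft) else if x = 7 then (Halt, 0, MRight) else (Term, x, MRight))"
| "ad k tg Term x = (Halt, 0, MRight)"

type_synonym acfg = "ast \<times> nat \<times> (nat \<Rightarrow> nat)"

definition astep :: "nat \<Rightarrow> (nat \<Rightarrow> nat \<Rightarrow> nat list) \<Rightarrow> acfg \<Rightarrow> acfg" where
  "astep k tg c = (case c of (a, p, T) \<Rightarrow> if a = Halt then c else
     (case ad k tg a (T p) of (a', s', m) \<Rightarrow>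
        (a', (case m of MRight \<Rightarrow> Suc p | MLeft \<Rightarrow> p - 1), T(p := s'))))"

lemma astep_R: "a \<noteq> Halt \<Longrightarrow> ad k tg a (T p) = (a', s', MRight) \<Longrightarrow> astep k tg (a, p, T) = (a', Suc p, T(p := s'))"
  by (simp add: astep_def)
lemma astep_L: "a \<noteq> Halt \<Longrightarrow> ad k tg a (T p) = (a', s', MLeft) \<Longrightarrow> astep k tg (a, p, T) = (a', p - 1, T(p := s'))"
  by (simp add: astep_def)
lemma astep_Halt[simp]: "astep k tg (Halt, p, T) = (Halt, p, T)"
  by (simp add: astep_def)
lemma funpow_Halt[simp]: "(astep k tg ^^ t) (Halt, p, T) = (Halt, p, T)"
  by (induction t) auto

lemma sweepR:
  assumes "a \<noteq> Halt" "\<forall>i. p \<le> i \<and> i < p + d \<longrightarrow> T i \<in> S" "\<forall>s\<in>S. ad k tg a s = (a, s, MRight)"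
  shows "(astep k tg ^^ d) (a, p, T) = (a, p + d, T)"
  using assms(2)
proof (induction d arbitrary: p)
  case 0 thus ?case by simp
next
  case (Suc d)
  have "T p \<in> S" using Suc.prems by auto
  hence "astep k tg (a, p, T) = (a, Suc p, T)"
    using astep_R[OF assms(1), of k tg T p a "T p"] assms(3) by simp
  moreover have "(astep k tg ^^ d) (a, Suc p, T) = (a, Suc p + d, T)"
    using Suc.IH[of "Suc p"] Suc.prems by auto
  ultimately show ?case by (simp del: funpow.simps add: funpow_Suc_right)
qed

lemma sweepL:
  assumes "a \<noteq> Halt" "\<forall>i. p < i \<and> i \<le> p + d \<longrightarrow> T i \<in> S" "\<forall>s\<in>S. ad k tg a s = (a, s, MLeft)"
  shows "(astep k tg ^^ d) (a, p + d, T) = (a, p, T)"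
  using assms(2)
proof (induction d)
  case 0 thus ?case by simp
next
  case (Suc d)
  have "T (p + Suc d) \<in> S" using Suc.prems by auto
  hence "astep k tg (a, p + Suc d, T) = (a, p + d, T)"
    using astep_L[OF assms(1), of k tg T "p + Suc d" a "T (p + Suc d)"] assms(3) by simp
  moreover have "(astep k tg ^^ d) (a, p + d, T) = (a, p, T)"
    using Suc.IH Suc.prems by auto
  ultimately show ?case by (simp del: funpow.simps add: funpow_Suc_right)
qed

definition tp :: "nat list \<Rightarrow> nat \<Rightarrow> nat" where
  "tp L = (\<lambda>i. if i < length L then L ! i else 0)"

lemma tp_beyond: "length L \<le> i \<Longrightarrow> tp L i = 0" by (simp add: tp_def)
lemma tp_at: "tp (P @ c # Q) (length P) = c" by (simp add: tp_def nth_append)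
lemma tp_mid: "length P \<le> i \<Longrightarrow> i < length P + length Q \<Longrightarrow> tp (P @ Q @ R) i \<in> set Q"
proof -
  assume a: "length P \<le> i" "i < length P + length Q"
  hence "i - length P < length Q" by simp
  thus ?thesis using a by (simp add: tp_def nth_append)
qed
lemma tp_upd: "(tp (P @ c # Q))(length P := d) = tp (P @ d # Q)"
  by (rule ext) (simp add: tp_def nth_append list_update_append)
lemma tp_snoc: "(tp L)(length L := d) = tp (L @ [d])"
  by (rule ext) (auto simp: tp_def nth_append)
lemma tp_upd0: "length L \<le> i \<Longrightarrow> (tp L)(i := 0) = tp L"
  by (rule ext) (auto simp: tp_def)
lemma tp_nth: "i < length L \<Longrightarrow> tp L i = L ! i" by (simp add: tp_def)

lemma run_seq: "((f :: 'a \<Rightarrow> 'a) ^^ a) x = y \<Longrightarrow> (f ^^ b) y = z \<Longrightarrow> (f ^^ (a + b)) x = z"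
  by (metis comp_apply funpow_add add.commute)

lemma run_one: "(f :: 'a \<Rightarrow> 'a) x = y \<Longrightarrow> (f ^^ 1) x = y" by (simp add: funpow_Suc_right)

definition Bt :: "nat list \<Rightarrow> nat \<Rightarrow> nat list \<Rightarrow> nat list" where
  "Bt w i out = 7 # replicate (i - 1) 6 @ drop i w @ 5 # out"

locale tmset =
  fixes k :: nat and tg :: "nat \<Rightarrow> nat \<Rightarrow> nat list" and B :: nat
  assumes tgs: "\<forall>r i. set (tg r i) \<subseteq> {1,2} \<and> length (tg r i) \<le> B"
begin

abbreviation st where "st \<equiv> astep k tg"

lemma trans_out: "trans k tg q s = Some (q', ot) \<Longrightarrow> set ot \<subseteq> {1,2,3,4} \<and> length ot \<le> Suc B"
proof (cases q)
  case (Num r i b)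
  assume a: "trans k tg q s = Some (q', ot)"
  have "set (tg r i) \<subseteq> {1,2}" "length (tg r i) \<le> B" using tgs by auto
  thus ?thesis using a Num by (auto split: if_splits)
qed (auto split: if_splits)

lemma trun_out: "trun k tg q w = Some (q', ot) \<Longrightarrow> set ot \<subseteq> {1,2,3,4} \<and> length ot \<le> Suc B * length w"
proof (induction w arbitrary: q ot)
  case Nil thus ?case by simp
next
  case (Cons s w)
  then obtain q1 o1 o2 where t: "trans k tg q s = Some (q1, o1)" "trun k tg q1 w = Some (q', o2)" "ot = o1 @ o2"
    by (auto simp del: trun.simps simp: trun_Cons_Some)
  from trans_out[OF t(1)] Cons.IH[OF t(2)] t(3) show ?case by auto
qed

lemma WR:
  assumes tr: "trans k tg q s = Some (q', ot)" and a0: "a0 \<noteq> Halt" "ad k tg a0 0 = wra k tg q s j"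
    and j: "j \<le> length ot" and L: "L \<noteq> []"
  shows "(st ^^ (length ot - j + 1)) (a0, length L + j, tp (L @ take j ot)) = (GoL q', length L + length ot - 1, tp (L @ ot))"
  using a0 j
proof (induction "length ot - j" arbitrary: j a0)
  case 0
  hence j: "j = length ot" by simp
  have z: "tp (L @ ot) (length L + j) = 0" using j by (simp add: tp_beyond)
  have "ad k tg a0 0 = (GoL q', 0, MLeft)" using 0 j tr by (simp add: wra_def)
  hence "st (a0, length L + j, tp (L @ ot)) = (GoL q', length L + j - 1, (tp (L @ ot))(length L + j := 0))"
    using astep_L[OF 0(2), of k tg "tp (L @ ot)" "length L + j"] z by simp
  also have "\<dots> = (GoL q', length L + length ot - 1, tp (L @ ot))" using j by (simp add: tp_upd0)
  finally show ?case using j by simp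
next
  case (Suc d)
  hence jl: "j < length ot" by simp
  have z: "tp (L @ take j ot) (length L + j) = 0" using jl by (simp add: tp_beyond)
  have "ad k tg a0 0 = (Wr q s (Suc j), ot ! j, MRight)" using Suc.prems jl tr by (simp add: wra_def)
  hence "st (a0, length L + j, tp (L @ take j ot)) = (Wr q s (Suc j), Suc (length L + j), (tp (L @ take j ot))(length L + j := ot ! j))"
    using astep_R[OF Suc.prems(1), of k tg "tp (L @ take j ot)" "length L + j"] z by simp
  also have "(tp (L @ take j ot))(length L + j := ot ! j) = tp (L @ take (Suc j) ot)"
    using tp_snoc[of "L @ take j ot" "ot ! j"] jl by (simp add: take_Suc_conv_app_nth min_def)
  finally have s1: "st (a0, length L + j, tp (L @ take j ot)) = (Wr q s (Suc j), length L + Suc j, tp (L @ take (Suc j) ot))"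
    by simp
  have IH: "(st ^^ (length ot - Suc j + 1)) (Wr q s (Suc j), length L + Suc j, tp (L @ take (Suc j) ot)) =
       (GoL q', length L + length ot - 1, tp (L @ ot))"
    by (rule Suc.hyps(1)) (use Suc.hyps(2) jl in auto)
  have H: "(st ^^ (1 + (length ot - Suc j + 1))) (a0, length L + j, tp (L @ take j ot)) = (GoL q', length L + length ot - 1, tp (L @ ot))"
    by (rule run_seq[OF run_one[of st, OF s1] IH])
  have E: "1 + (length ot - Suc j + 1) = length ot - j + 1" using jl by simp
  show ?case using H by (simp only: E)
qed

lemma sw_mid: "\<forall>i. length P \<le> i \<and> i < length P + length Q \<longrightarrow> tp (P @ Q @ R) i \<in> set Q"
  using tp_mid by blast

lemma iterB0:
  assumes w: "set w \<subseteq> {1,2,3,4}" "w \<noteq> []" and tr: "trans k tg F0 (w ! 0) = Some (q', ot)"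
  shows "(st ^^ (2 * length w + 2 * length ot + 3)) (Cons F0 True, 0, tp w) = (Cons q' False, 1, tp (Bt w 1 ot))"
proof -
  obtain s ws where sw: "w = s # ws" using w(2) by (cases w) auto
  have s: "s \<in> {1,2,3,4}" "set ws \<subseteq> {1,2,3,4}" using w sw by auto
  have tr': "trans k tg F0 s = Some (q', ot)" using tr sw by simp
  have oo: "set ot \<subseteq> {1,2,3,4}" using trans_out[OF tr'] by simp
  have c1: "st (Cons F0 True, 0, tp (s # ws)) = (GoR F0 s True, 1, tp (7 # ws))"
  proof -
    have "tp (s # ws) 0 = s" by (simp add: tp_nth)
    hence "st (Cons F0 True, 0, tp (s # ws)) = (GoR F0 s True, 1, (tp (s # ws))(0 := 7))"
      using s tr' by (simp add: astep_def)
    also have "(tp (s # ws))(0 := 7) = tp (7 # ws)" using tp_upd[of "[]" s ws 7] by simp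
    finally show ?thesis .
  qed
  have c2: "(st ^^ length ws) (GoR F0 s True, 1, tp (7 # ws)) = (GoR F0 s True, 1 + length ws, tp (7 # ws))"
  proof (rule sweepR[where S = "set ws"])
    show "\<forall>i. 1 \<le> i \<and> i < 1 + length ws \<longrightarrow> tp (7 # ws) i \<in> set ws"
      using sw_mid[of "[7]" ws "[]"] by simp
    show "\<forall>c\<in>set ws. ad k tg (GoR F0 s True) c = (GoR F0 s True, c, MRight)" using s by auto
  qed simp
  have c3: "st (GoR F0 s True, 1 + length ws, tp (7 # ws)) = (Wr F0 s 0, length ws + 2, tp (7 # ws @ [5]))"
  proof -
    have "tp (7 # ws) (1 + length ws) = 0" by (simp add: tp_beyond)
    hence "st (GoR F0 s True, 1 + length ws, tp (7 # ws)) = (Wr F0 s 0, length ws + 2, (tp (7 # ws))(length (7 # ws) := 5))"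
      by (simp add: astep_def)
    also have "(tp (7 # ws))(length (7 # ws) := 5) = tp (7 # ws @ [5])" by (simp only: tp_snoc) simp
    finally show ?thesis .
  qed
  have c4: "(st ^^ (length ot + 1)) (Wr F0 s 0, length ws + 2, tp (7 # ws @ [5])) = (GoL q', length ws + 1 + length ot, tp (7 # ws @ 5 # ot))"
    using WR[OF tr', of "Wr F0 s 0" 0 "7 # ws @ [5]"] by simp
  have c5: "(st ^^ (length ws + 1 + length ot)) (GoL q', length ws + 1 + length ot, tp (7 # ws @ 5 # ot)) = (GoL q', 0, tp (7 # ws @ 5 # ot))"
  proof -
    have "(st ^^ (length ws + 1 + length ot)) (GoL q', 0 + (length ws + 1 + length ot), tp (7 # ws @ 5 # ot)) = (GoL q', 0, tp (7 # ws @ 5 # ot))"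
    proof (rule sweepL[where S = "set (ws @ 5 # ot)"])
      show "\<forall>i. 0 < i \<and> i \<le> 0 + (length ws + 1 + length ot) \<longrightarrow> tp (7 # ws @ 5 # ot) i \<in> set (ws @ 5 # ot)"
        using sw_mid[of "[7]" "ws @ 5 # ot" "[]"] by auto
      show "\<forall>c\<in>set (ws @ 5 # ot). ad k tg (GoL q') c = (GoL q', c, MLeft)" using s oo by auto
    qed simp
    thus ?thesis by simp
  qed
  have c6: "st (GoL q', 0, tp (7 # ws @ 5 # ot)) = (Cons q' False, 1, tp (7 # ws @ 5 # ot))"
  proof -
    have "tp (7 # ws @ 5 # ot) 0 = 7" by (simp add: tp_nth)
    thus ?thesis by (simp add: astep_def fun_upd_idem)
  qed
  have r: "(st ^^ (1 + length ws + 1 + (length ot + 1) + (length ws + 1 + length ot) + 1)) (Cons F0 True, 0, tp (s # ws))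
      = (Cons q' False, 1, tp (7 # ws @ 5 # ot))"
    by (rule run_seq[OF run_seq[OF run_seq[OF run_seq[OF run_seq[OF run_one[of st, OF c1] c2] run_one[of st, OF c3]] c4] c5] run_one[of st, OF c6]])
  have E: "1 + length ws + 1 + (length ot + 1) + (length ws + 1 + length ot) + 1 = 2 * length (s # ws) + 2 * length ot + 3"
    by simp
  have Bt: "Bt (s # ws) 1 ot = 7 # ws @ 5 # ot" by (simp add: Bt_def)
  show ?thesis unfolding sw unfolding Bt E[symmetric] by (rule r)
qed

lemma iterB:
  assumes w: "set w \<subseteq> {1,2,3,4}" and i: "1 \<le> i" "i < length w"
    and tr: "trans k tg q (w ! i) = Some (q', ot)" and out: "set out \<subseteq> {1,2,3,4}"
  shows "(st ^^ (2 * length w + 2 * length out + 2 * length ot + 3 - 2 * i)) (Cons q False, i, tp (Bt w i out))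
     = (Cons q' False, Suc i, tp (Bt w (Suc i) (out @ ot)))"
proof -
  define P where "P = 7 # replicate (i - 1) (6::nat)"
  define s where "s = w ! i"
  define Q where "Q = drop (Suc i) w @ 5 # out"
  have lP: "length P = i" using i by (simp add: P_def)
  have sS: "s \<in> {1,2,3,4}" using w nth_mem[OF i(2)] unfolding s_def by blast
  have tr': "trans k tg q s = Some (q', ot)" using tr by (simp add: s_def)
  have oo: "set ot \<subseteq> {1,2,3,4}" using trans_out[OF tr'] by simp
  have sQ: "set Q \<subseteq> {1,2,3,4,5}" using w out by (auto simp: Q_def dest: in_set_dropD)
  have lQ: "length Q = length w - i + length out" using i by (simp add: Q_def)
  have B0: "Bt w i out = P @ s # Q"
    using i by (simp add: Bt_def P_def Q_def s_def Cons_nth_drop_Suc)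
  have c1: "st (Cons q False, i, tp (P @ s # Q)) = (GoR q s False, Suc i, tp (P @ 6 # Q))"
  proof -
    have "tp (P @ s # Q) i = s" using tp_at[of P s Q] lP by simp
    hence "st (Cons q False, i, tp (P @ s # Q)) = (GoR q s False, Suc i, (tp (P @ s # Q))(length P := 6))"
      using sS tr' lP by (simp add: astep_def)
    also have "(tp (P @ s # Q))(length P := 6) = tp (P @ 6 # Q)" by (rule tp_upd)
    finally show ?thesis .
  qed
  have c2: "(st ^^ length Q) (GoR q s False, Suc i, tp (P @ 6 # Q)) = (GoR q s False, Suc i + length Q, tp (P @ 6 # Q))"
  proof (rule sweepR[where S = "set Q"])
    show "\<forall>j. Suc i \<le> j \<and> j < Suc i + length Q \<longrightarrow> tp (P @ 6 # Q) j \<in> set Q"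
      using sw_mid[of "P @ [6]" Q "[]"] lP by simp
    show "\<forall>c\<in>set Q. ad k tg (GoR q s False) c = (GoR q s False, c, MRight)" using sQ by auto
  qed simp
  have c4: "(st ^^ (length ot + 1)) (GoR q s False, Suc i + length Q, tp (P @ 6 # Q))
      = (GoL q', i + (length Q + length ot), tp (P @ 6 # Q @ ot))"
    using WR[OF tr', of "GoR q s False" 0 "P @ 6 # Q"] lP by (simp add: wra_def)
  have c5: "(st ^^ (length Q + length ot)) (GoL q', i + (length Q + length ot), tp (P @ 6 # Q @ ot))
      = (GoL q', i, tp (P @ 6 # Q @ ot))"
  proof (rule sweepL[where S = "set (Q @ ot)"])
    show "\<forall>j. i < j \<and> j \<le> i + (length Q + length ot) \<longrightarrow> tp (P @ 6 # Q @ ot) j \<in> set (Q @ ot)"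
      using sw_mid[of "P @ [6]" "Q @ ot" "[]"] lP by auto
    show "\<forall>c\<in>set (Q @ ot). ad k tg (GoL q') c = (GoL q', c, MLeft)" using sQ oo by auto
  qed simp
  have c6: "st (GoL q', i, tp (P @ 6 # Q @ ot)) = (Cons q' False, Suc i, tp (P @ 6 # Q @ ot))"
  proof -
    have "tp (P @ 6 # Q @ ot) i = 6" using tp_at[of P 6 "Q @ ot"] lP by simp
    thus ?thesis by (simp add: astep_def fun_upd_idem)
  qed
  have r: "(st ^^ (1 + length Q + (length ot + 1) + (length Q + length ot) + 1)) (Cons q False, i, tp (P @ s # Q))
      = (Cons q' False, Suc i, tp (P @ 6 # Q @ ot))"
    by (rule run_seq[OF run_seq[OF run_seq[OF run_seq[OF run_one[of st, OF c1] c2] c4] c5] run_one[of st, OF c6]])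
  have E: "1 + length Q + (length ot + 1) + (length Q + length ot) + 1 = 2 * length w + 2 * length out + 2 * length ot + 3 - 2 * i"
    using lQ i by simp
  have B1: "Bt w (Suc i) (out @ ot) = P @ 6 # Q @ ot"
  proof -
    have "replicate i (6::nat) = replicate (i - 1) 6 @ [6]" using i
      by (metis Suc_diff_1 less_le_trans zero_less_one replicate_Suc replicate_append_same)
    thus ?thesis by (simp add: Bt_def P_def Q_def)
  qed
  show ?thesis unfolding B0 B1 E[symmetric] by (rule r)
qed

lemma rep_snoc: "replicate g x @ [x] = x # replicate g x"
  by (simp add: replicate_append_same)

lemma rejL_run:
  "(st ^^ Suc j) (RejL, j, tp (7 # replicate j 6 @ R)) = (Halt, 1, (tp (7 # replicate j 6 @ R))(0 := 0))"
proof -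
  have c1: "(st ^^ j) (RejL, 0 + j, tp (7 # replicate j 6 @ R)) = (RejL, 0, tp (7 # replicate j 6 @ R))"
  proof (rule sweepL[where S = "{6}"])
    show "\<forall>i. 0 < i \<and> i \<le> 0 + j \<longrightarrow> tp (7 # replicate j 6 @ R) i \<in> {6}"
      using sw_mid[of "[7]" "replicate j 6" R] by auto
  qed auto
  have c2: "st (RejL, 0, tp (7 # replicate j 6 @ R)) = (Halt, 1, (tp (7 # replicate j 6 @ R))(0 := 0))"
    by (simp add: astep_def tp_nth)
  show ?thesis using run_seq[OF c1 run_one[of st, OF c2]] by simp
qed

lemma rejB:
  assumes w: "set w \<subseteq> {1,2,3,4}" and i: "1 \<le> i" "i < length w"
    and tr: "trans k tg q (w ! i) = None"
  shows "\<exists>T. (st ^^ Suc i) (Cons q False, i, tp (Bt w i out)) = (Halt, 1, T) \<and> T 0 = 0"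
proof -
  define P where "P = 7 # replicate (i - 1) (6::nat)"
  define s where "s = w ! i"
  define Q where "Q = drop (Suc i) w @ 5 # out"
  have lP: "length P = i" using i by (simp add: P_def)
  have sS: "s \<in> {1,2,3,4}" using w nth_mem[OF i(2)] unfolding s_def by blast
  have B0: "Bt w i out = P @ s # Q"
    using i by (simp add: Bt_def P_def Q_def s_def Cons_nth_drop_Suc)
  have c1: "st (Cons q False, i, tp (P @ s # Q)) = (RejL, i - 1, tp (P @ 6 # Q))"
  proof -
    have "tp (P @ s # Q) i = s" using tp_at[of P s Q] lP by simp
    hence "st (Cons q False, i, tp (P @ s # Q)) = (RejL, i - 1, (tp (P @ s # Q))(length P := 6))"
      using sS tr lP by (simp add: astep_def s_def)
    also have "(tp (P @ s # Q))(length P := 6) = tp (P @ 6 # Q)" by (rule tp_upd)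
    finally show ?thesis .
  qed
  note c2 = rejL_run[of "i - 1" "6 # Q"]
  have PQ: "P @ 6 # Q = 7 # replicate (i - 1) 6 @ 6 # Q" by (simp add: P_def)
  have "(st ^^ (1 + Suc (i - 1))) (Cons q False, i, tp (P @ s # Q)) = (Halt, 1, (tp (P @ 6 # Q))(0 := 0))"
    using run_seq[OF run_one[of st, OF c1] c2[folded PQ]] .
  moreover have "1 + Suc (i - 1) = Suc i" using i by simp
  ultimately show ?thesis unfolding B0 by (intro exI[of _ "(tp (P @ 6 # Q))(0 := 0)"]) simp
qed

lemma endB_rej:
  assumes w: "w \<noteq> []" and q: "q \<noteq> F0"
  shows "\<exists>T. (st ^^ Suc (length w)) (Cons q False, length w, tp (Bt w (length w) out)) = (Halt, 1, T) \<and> T 0 = 0"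
proof -
  define n where "n = length w"
  have n: "n \<ge> 1" using w by (simp add: n_def Suc_le_eq)
  have B0: "Bt w n out = (7 # replicate (n - 1) 6) @ 5 # out" by (simp add: Bt_def n_def)
  have lP: "length (7 # replicate (n - 1) (6::nat)) = n" using n by simp
  have c1: "st (Cons q False, n, tp (Bt w n out)) = (RejL, n - 1, tp (7 # replicate (n - 1) 6 @ 5 # out))"
  proof -
    have "tp (Bt w n out) n = 5" unfolding B0 using tp_at[of "7 # replicate (n - 1) 6" 5 out] lP by simp
    thus ?thesis using q unfolding B0 by (simp add: astep_def fun_upd_idem)
  qed
  note c2 = rejL_run[of "n - 1" "5 # out"]
  have "(st ^^ (1 + Suc (n - 1))) (Cons q False, n, tp (Bt w n out)) = (Halt, 1, (tp (7 # replicate (n - 1) 6 @ 5 # out))(0 := 0))"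
    using run_seq[OF run_one[of st, OF c1] c2] .
  moreover have "1 + Suc (n - 1) = Suc n" using n by simp
  ultimately have "(st ^^ Suc n) (Cons q False, n, tp (Bt w n out)) = (Halt, 1, (tp (7 # replicate (n - 1) 6 @ 5 # out))(0 := 0))"
    by (simp only:)
  thus ?thesis unfolding n_def by (intro exI[of _ "(tp (7 # replicate (n - 1) 6 @ 5 # out))(0 := 0)"]) (simp del: funpow.simps add: n_def)
qed

lemma endB_acc:
  assumes w: "w \<noteq> []"
  shows "st (Cons F0 False, length w, tp (Bt w (length w) out)) = (Seek, Suc (length w), tp (7 # replicate (length w) 6 @ out))"
proof -
  define n where "n = length w"
  have n: "n \<ge> 1" using w by (simp add: n_def Suc_le_eq)
  have B0: "Bt w n out = (7 # replicate (n - 1) 6) @ 5 # out" by (simp add: Bt_def n_def)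
  have lP: "length (7 # replicate (n - 1) (6::nat)) = n" using n by simp
  have "tp (Bt w n out) n = 5" unfolding B0 using tp_at[of "7 # replicate (n - 1) 6" 5 out] lP by simp
  hence "st (Cons F0 False, n, tp (Bt w n out)) = (Seek, Suc n, (tp ((7 # replicate (n - 1) 6) @ 5 # out))(length (7 # replicate (n - 1) (6::nat)) := 6))"
    unfolding B0 using lP by (simp add: astep_def)
  also have "\<dots> = (Seek, Suc n, tp (7 # replicate n 6 @ out))"
  proof -
    obtain m where m: "n = Suc m" using n by (cases n) auto
    have "(7 # replicate (n - 1) 6) @ 6 # out = 7 # replicate n 6 @ (out :: nat list)"
      using m by (simp add: replicate_app_Cons_same)
    thus ?thesis by (simp only: tp_upd)
  qed
  finally show ?thesis unfolding n_def .
qed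

lemma last_in: "W \<noteq> [] \<Longrightarrow> set W \<subseteq> {1,2,3,4} \<Longrightarrow> tp W (length W - 1) \<in> {1,2,3,4}"
proof -
  assume a: "W \<noteq> []" "set W \<subseteq> {1,2,3,4}"
  hence l: "length W - 1 < length W" by (cases W) auto
  hence "W ! (length W - 1) \<in> set W" by (rule nth_mem)
  hence "W ! (length W - 1) \<in> {1,2,3,4}" using a(2) by blast
  thus ?thesis using l by (simp add: tp_nth)
qed

lemma tp_last: "W \<noteq> [] \<Longrightarrow> tp (W @ R) (length W - 1) = tp W (length W - 1)"
proof -
  assume "W \<noteq> []"
  hence "length W - 1 < length W" by (cases W) auto
  thus ?thesis by (simp add: tp_def nth_append)
qed

lemma iterC1:
  assumes W: "W \<noteq> []" "set W \<subseteq> {1,2,3,4}" and c: "c \<in> {1,2,3,4}"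
  shows "(st ^^ (2 * Suc g + 3)) (Seek, length W + Suc g, tp (W @ replicate (Suc g) 6 @ c # U))
     = (Seek, length (W @ [c]) + Suc g, tp ((W @ [c]) @ replicate (Suc g) 6 @ U))"
proof -
  have lw: "length W \<ge> 1" using W by (cases W) auto
  have c1: "st (Seek, length W + Suc g, tp (W @ replicate (Suc g) 6 @ c # U))
      = (Carry c, (length W - 1) + Suc g, tp (W @ replicate (Suc g) 6 @ 6 # U))"
  proof -
    have "tp ((W @ replicate (Suc g) 6) @ c # U) (length (W @ replicate (Suc g) 6)) = c" by (rule tp_at)
    hence "st (Seek, length W + Suc g, tp ((W @ replicate (Suc g) 6) @ c # U))
      = (Carry c, length W + g, (tp ((W @ replicate (Suc g) 6) @ c # U))(length (W @ replicate (Suc g) 6) := 6))"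
      using c by (auto simp: astep_def)
    thus ?thesis unfolding tp_upd using lw by simp
  qed
  have c2: "(st ^^ Suc g) (Carry c, (length W - 1) + Suc g, tp (W @ replicate (Suc g) 6 @ 6 # U))
      = (Carry c, length W - 1, tp (W @ replicate (Suc g) 6 @ 6 # U))"
  proof (rule sweepL[where S = "{6}"])
    show "\<forall>i. length W - 1 < i \<and> i \<le> length W - 1 + Suc g \<longrightarrow> tp (W @ replicate (Suc g) 6 @ 6 # U) i \<in> {6}"
    proof (intro allI impI)
      fix i assume "length W - 1 < i \<and> i \<le> length W - 1 + Suc g"
      hence "length W \<le> i \<and> i < length W + length (replicate (Suc g) (6::nat))" using lw by auto
      hence "tp (W @ replicate (Suc g) 6 @ 6 # U) i \<in> set (replicate (Suc g) (6::nat))"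
        using sw_mid[of W "replicate (Suc g) 6" "6 # U"] by blast
      thus "tp (W @ replicate (Suc g) 6 @ 6 # U) i \<in> {6}" by (metis empty_iff in_set_replicate insert_iff)
    qed
  qed auto
  have c3: "st (Carry c, length W - 1, tp (W @ replicate (Suc g) 6 @ 6 # U))
      = (Put c, length W, tp (W @ replicate (Suc g) 6 @ 6 # U))"
  proof -
    have x: "tp (W @ replicate (Suc g) 6 @ 6 # U) (length W - 1) \<in> {1,2,3,4}"
      using tp_last[OF W(1)] last_in[OF W] by simp
    thus ?thesis using lw by (auto simp: astep_def fun_upd_idem)
  qed
  have c4: "st (Put c, length W, tp (W @ replicate (Suc g) 6 @ 6 # U))
      = (Seek, Suc (length W), tp ((W @ [c]) @ (replicate g 6 @ [6]) @ U))"
  proof -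
    have "st (Put c, length W, tp (W @ 6 # (replicate g 6 @ 6 # U)))
      = (Seek, Suc (length W), (tp (W @ 6 # (replicate g 6 @ 6 # U)))(length W := c))"
      by (simp add: astep_def)
    thus ?thesis unfolding tp_upd by (simp add: replicate_app_Cons_same)
  qed
  have c5: "(st ^^ Suc g) (Seek, Suc (length W), tp ((W @ [c]) @ (replicate g 6 @ [6]) @ U))
      = (Seek, Suc (length W) + Suc g, tp ((W @ [c]) @ (replicate g 6 @ [6]) @ U))"
  proof (rule sweepR[where S = "{6}"])
    show "\<forall>i. Suc (length W) \<le> i \<and> i < Suc (length W) + Suc g \<longrightarrow> tp ((W @ [c]) @ (replicate g 6 @ [6]) @ U) i \<in> {6}"
      using sw_mid[of "W @ [c]" "replicate g 6 @ [6]" U] by auto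
  qed auto
  note r = run_seq[OF run_seq[OF run_seq[OF run_seq[OF run_one[of st, OF c1] c2] run_one[of st, OF c3]] run_one[of st, OF c4]] c5]
  have E: "1 + Suc g + 1 + 1 + Suc g = 2 * Suc g + 3" by simp
  have T: "(W @ [c]) @ (replicate g 6 @ [6]) @ U = (W @ [c]) @ replicate (Suc g) 6 @ U"
    by (simp add: replicate_app_Cons_same)
  show ?thesis using r unfolding E T length_append_singleton .
qed

lemma rep_in6: "x \<in> set (replicate g (6::nat)) \<Longrightarrow> x \<in> {6}"
  by (metis empty_iff in_set_replicate insert_iff)

lemma iterC0:
  assumes c: "c \<in> {1,2,3,4}"
  shows "(st ^^ (2 * Suc g + 1)) (Seek, Suc g, tp (7 # replicate g 6 @ c # U))
     = (Seek, length [c] + Suc g, tp ([c] @ replicate (Suc g) 6 @ U))"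
proof -
  have c1: "st (Seek, Suc g, tp (7 # replicate g 6 @ c # U)) = (Carry c, 0 + g, tp (7 # replicate g 6 @ 6 # U))"
  proof -
    have "tp ((7 # replicate g 6) @ c # U) (length (7 # replicate g (6::nat))) = c" by (rule tp_at)
    hence "st (Seek, Suc g, tp ((7 # replicate g 6) @ c # U))
      = (Carry c, g, (tp ((7 # replicate g 6) @ c # U))(length (7 # replicate g (6::nat)) := 6))"
      using c by (auto simp: astep_def)
    thus ?thesis unfolding tp_upd by simp
  qed
  have c2: "(st ^^ g) (Carry c, 0 + g, tp (7 # replicate g 6 @ 6 # U)) = (Carry c, 0, tp (7 # replicate g 6 @ 6 # U))"
  proof (rule sweepL[where S = "{6}"])
    show "\<forall>i. 0 < i \<and> i \<le> 0 + g \<longrightarrow> tp (7 # replicate g 6 @ 6 # U) i \<in> {6}"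
    proof (intro allI impI)
      fix i assume "0 < i \<and> i \<le> 0 + g"
      hence "length [7::nat] \<le> i \<and> i < length [7::nat] + length (replicate g (6::nat))" by auto
      hence "tp ([7] @ replicate g 6 @ 6 # U) i \<in> set (replicate g (6::nat))"
        using sw_mid[of "[7]" "replicate g 6" "6 # U"] by blast
      thus "tp (7 # replicate g 6 @ 6 # U) i \<in> {6}" using rep_in6 by simp
    qed
  qed auto
  have c3: "st (Carry c, 0, tp (7 # replicate g 6 @ 6 # U)) = (Seek, 1, tp ([c] @ (replicate g 6 @ [6]) @ U))"
  proof -
    have "st (Carry c, 0, tp ([] @ 7 # (replicate g 6 @ 6 # U))) = (Seek, 1, (tp ([] @ 7 # (replicate g 6 @ 6 # U)))(length [] := c))"
      by (simp add: astep_def tp_nth)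
    thus ?thesis using tp_upd[of "[]" 7 "replicate g 6 @ 6 # U" c] by simp
  qed
  have c4: "(st ^^ Suc g) (Seek, 1, tp ([c] @ (replicate g 6 @ [6]) @ U)) = (Seek, 1 + Suc g, tp ([c] @ (replicate g 6 @ [6]) @ U))"
  proof (rule sweepR[where S = "{6}"])
    show "\<forall>i. 1 \<le> i \<and> i < 1 + Suc g \<longrightarrow> tp ([c] @ (replicate g 6 @ [6]) @ U) i \<in> {6}"
    proof (intro allI impI)
      fix i assume "1 \<le> i \<and> i < 1 + Suc g"
      hence "length [c] \<le> i \<and> i < length [c] + length (replicate g (6::nat) @ [6])" by auto
      hence "tp ([c] @ (replicate g 6 @ [6]) @ U) i \<in> set (replicate g (6::nat) @ [6])"
        using sw_mid[of "[c]" "replicate g 6 @ [6]" U] by blast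
      thus "tp ([c] @ (replicate g 6 @ [6]) @ U) i \<in> {6}" using rep_in6 by auto
    qed
  qed auto
  note r = run_seq[OF run_seq[OF run_seq[OF run_one[of st, OF c1] c2] run_one[of st, OF c3]] c4]
  have E: "1 + g + 1 + Suc g = 2 * Suc g + 1" by simp
  have T: "[c] @ (replicate g 6 @ [6]) @ U = [c] @ replicate (Suc g) 6 @ U"
    by (simp add: replicate_app_Cons_same)
  have P: "length [c] + Suc g = 1 + Suc g" by simp
  show ?thesis using r unfolding E T P .
qed

definition out_is :: "(nat \<Rightarrow> nat) \<Rightarrow> nat list \<Rightarrow> bool" where
  "out_is T ot \<longleftrightarrow> (\<forall>i<length ot. T i = ot ! i) \<and> T (length ot) = 0"

lemma endC1:
  assumes W: "W \<noteq> []" "set W \<subseteq> {1,2,3,4}"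
  shows "\<exists>T. (st ^^ (Suc g + 3)) (Seek, length W + Suc g, tp (W @ replicate (Suc g) 6)) = (Halt, Suc (length W), T)
     \<and> out_is T W"
proof -
  have lw: "length W \<ge> 1" using W by (cases W) auto
  have c1: "st (Seek, length W + Suc g, tp (W @ replicate (Suc g) 6)) = (Fin, (length W - 1) + Suc g, tp (W @ replicate (Suc g) 6 @ []))"
  proof -
    have z: "tp (W @ replicate (Suc g) 6) (length W + Suc g) = 0" by (simp add: tp_beyond)
    hence "st (Seek, length W + Suc g, tp (W @ replicate (Suc g) 6)) = (Fin, length W + g, (tp (W @ replicate (Suc g) 6))(length W + Suc g := 0))"
      by (simp add: astep_def)
    thus ?thesis using lw by (simp add: tp_upd0)
  qed
  have c2: "(st ^^ Suc g) (Fin, (length W - 1) + Suc g, tp (W @ replicate (Suc g) 6 @ [])) = (Fin, length W - 1, tp (W @ replicate (Suc g) 6 @ []))"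
  proof (rule sweepL[where S = "{6}"])
    show "\<forall>i. length W - 1 < i \<and> i \<le> length W - 1 + Suc g \<longrightarrow> tp (W @ replicate (Suc g) 6 @ []) i \<in> {6}"
    proof (intro allI impI)
      fix i assume "length W - 1 < i \<and> i \<le> length W - 1 + Suc g"
      hence "length W \<le> i \<and> i < length W + length (replicate (Suc g) (6::nat))" using lw by auto
      hence "tp (W @ replicate (Suc g) 6 @ []) i \<in> set (replicate (Suc g) (6::nat))"
        using sw_mid[of W "replicate (Suc g) 6" "[]"] by blast
      thus "tp (W @ replicate (Suc g) 6 @ []) i \<in> {6}" by (rule rep_in6)
    qed
  qed auto
  have c3: "st (Fin, length W - 1, tp (W @ replicate (Suc g) 6 @ [])) = (Term, length W, tp (W @ 6 # replicate g 6))"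
  proof -
    have x: "tp (W @ replicate (Suc g) 6 @ []) (length W - 1) \<in> {1,2,3,4}"
      using tp_last[OF W(1)] last_in[OF W] by simp
    thus ?thesis using lw by (auto simp: astep_def fun_upd_idem)
  qed
  have c4: "st (Term, length W, tp (W @ 6 # replicate g 6)) = (Halt, Suc (length W), tp (W @ 0 # replicate g 6))"
  proof -
    have "st (Term, length W, tp (W @ 6 # replicate g 6)) = (Halt, Suc (length W), (tp (W @ 6 # replicate g 6))(length W := 0))"
      by (simp add: astep_def)
    thus ?thesis unfolding tp_upd .
  qed
  note r = run_seq[OF run_seq[OF run_seq[OF run_one[of st, OF c1] c2] run_one[of st, OF c3]] run_one[of st, OF c4]]
  have E: "1 + Suc g + 1 + 1 = Suc g + 3" by simp
  have P: "length W - 1 + Suc g + 1 = length W + Suc g" using lw by simp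
  have o: "out_is (tp (W @ 0 # replicate g 6)) W"
    unfolding out_is_def by (auto simp: tp_def nth_append)
  show ?thesis using r o unfolding E by (intro exI[of _ "tp (W @ 0 # replicate g 6)"]) (simp only: c1[symmetric] P)
qed

lemma endC0:
  "\<exists>T. (st ^^ (Suc g + 1)) (Seek, Suc g, tp (7 # replicate g 6)) = (Halt, 1, T) \<and> out_is T []"
proof -
  have c1: "st (Seek, Suc g, tp (7 # replicate g 6)) = (Fin, 0 + g, tp (7 # replicate g 6 @ []))"
  proof -
    have z: "tp (7 # replicate g 6) (Suc g) = 0" by (simp add: tp_beyond)
    hence "st (Seek, Suc g, tp (7 # replicate g 6)) = (Fin, g, (tp (7 # replicate g 6))(Suc g := 0))"
      by (simp add: astep_def)
    thus ?thesis by (simp add: tp_upd0)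
  qed
  have c2: "(st ^^ g) (Fin, 0 + g, tp (7 # replicate g 6 @ [])) = (Fin, 0, tp (7 # replicate g 6 @ []))"
  proof (rule sweepL[where S = "{6}"])
    show "\<forall>i. 0 < i \<and> i \<le> 0 + g \<longrightarrow> tp (7 # replicate g 6 @ []) i \<in> {6}"
    proof (intro allI impI)
      fix i assume "0 < i \<and> i \<le> 0 + g"
      hence "length [7::nat] \<le> i \<and> i < length [7::nat] + length (replicate g (6::nat))" by auto
      hence "tp ([7] @ replicate g 6 @ []) i \<in> set (replicate g (6::nat))"
        using sw_mid[of "[7]" "replicate g 6" "[]"] by blast
      thus "tp (7 # replicate g 6 @ []) i \<in> {6}" using rep_in6 by simp
    qed
  qed auto
  have c3: "st (Fin, 0, tp (7 # replicate g 6 @ [])) = (Halt, 1, (tp (7 # replicate g 6 @ []))(0 := 0))"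
    by (simp add: astep_def tp_nth)
  note r = run_seq[OF run_seq[OF run_one[of st, OF c1] c2] run_one[of st, OF c3]]
  have E: "1 + g + 1 = Suc g + 1" by simp
  have o: "out_is ((tp (7 # replicate g 6 @ []))(0 := 0)) []" by (simp add: out_is_def)
  show ?thesis using r o unfolding E by auto
qed

definition Ct :: "nat list \<Rightarrow> nat \<Rightarrow> nat list \<Rightarrow> nat list" where
  "Ct W g U = (if W = [] then 7 # replicate g 6 else W @ replicate (Suc g) 6) @ U"

lemma phaseC:
  assumes "set W \<subseteq> {1,2,3,4}" "set U \<subseteq> {1,2,3,4}"
  shows "\<exists>t \<le> (length U + 1) * (2 * Suc g + 3). \<exists>p T.
     (st ^^ t) (Seek, length W + Suc g, tp (Ct W g U)) = (Halt, p, T) \<and> out_is T (W @ U)"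
  using assms
proof (induction U arbitrary: W)
  case Nil
  show ?case
  proof (cases "W = []")
    case True
    from endC0[of g] obtain T where "(st ^^ (Suc g + 1)) (Seek, Suc g, tp (7 # replicate g 6)) = (Halt, 1, T)" "out_is T []"
      by blast
    thus ?thesis using True by (intro exI[of _ "Suc g + 1"]) (auto simp: Ct_def)
  next
    case False
    from endC1[OF False Nil.prems(1), of g] obtain T where
      "(st ^^ (Suc g + 3)) (Seek, length W + Suc g, tp (W @ replicate (Suc g) 6)) = (Halt, Suc (length W), T)" "out_is T W"
      by blast
    thus ?thesis using False by (intro exI[of _ "Suc g + 3"]) (auto simp: Ct_def)
  qed
next
  case (Cons c U)
  have c: "c \<in> {1,2,3,4}" and U: "set U \<subseteq> {1,2,3,4}" using Cons.prems by auto
  have step: "\<exists>W'. (st ^^ (2 * Suc g + 3)) (Seek, length W + Suc g, tp (Ct W g (c # U))) = (Seek, length W' + Suc g, tp (Ct W' g U))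
     \<and> W' = W @ [c] \<or> (\<exists>t0 \<le> 2 * Suc g + 3. (st ^^ t0) (Seek, length W + Suc g, tp (Ct W g (c # U))) = (Seek, length W' + Suc g, tp (Ct W' g U))
     \<and> W' = W @ [c])"
  proof (cases "W = []")
    case True
    have "(st ^^ (2 * Suc g + 1)) (Seek, Suc g, tp (7 # replicate g 6 @ c # U))
     = (Seek, length [c] + Suc g, tp ([c] @ replicate (Suc g) 6 @ U))" by (rule iterC0[OF c])
    thus ?thesis using True by (intro exI[of _ "[c]"] disjI2 exI[of _ "2 * Suc g + 1"]) (simp add: Ct_def)
  next
    case False
    have "(st ^^ (2 * Suc g + 3)) (Seek, length W + Suc g, tp (W @ replicate (Suc g) 6 @ c # U))
     = (Seek, length (W @ [c]) + Suc g, tp ((W @ [c]) @ replicate (Suc g) 6 @ U))" by (rule iterC1[OF False Cons.prems(1) c])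
    thus ?thesis using False by (intro exI[of _ "W @ [c]"] disjI1) (simp add: Ct_def)
  qed
  then obtain W' t0 where W': "W' = W @ [c]" "t0 \<le> 2 * Suc g + 3"
    "(st ^^ t0) (Seek, length W + Suc g, tp (Ct W g (c # U))) = (Seek, length W' + Suc g, tp (Ct W' g U))"
    by blast
  have sW': "set W' \<subseteq> {1,2,3,4}" using W' Cons.prems c by auto
  from Cons.IH[OF sW' U] obtain t p T where t: "t \<le> (length U + 1) * (2 * Suc g + 3)"
    "(st ^^ t) (Seek, length W' + Suc g, tp (Ct W' g U)) = (Halt, p, T)" "out_is T (W' @ U)" by blast
  have "(st ^^ (t0 + t)) (Seek, length W + Suc g, tp (Ct W g (c # U))) = (Halt, p, T)"
    by (rule run_seq[OF W'(3) t(2)])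
  moreover have "t0 + t \<le> (length (c # U) + 1) * (2 * Suc g + 3)" using W'(2) t(1) by simp
  moreover have "W' @ U = W @ c # U" using W' by simp
  ultimately show ?case using t(3) by metis
qed

definition CB :: "nat \<Rightarrow> nat" where "CB n = 2 * (n + Suc B * n) + 3"
definition CC :: "nat \<Rightarrow> nat" where "CC n = (Suc B * n + 1) * (2 * Suc n + 3) + n + 1"

lemma Ff_Some: "trun k tg F0 w = Some (F0, ot) \<Longrightarrow> Ff k tg w = ot" by (simp add: Ff_def)
lemma Ff_Some_not: "trun k tg F0 w = Some (q, ot) \<Longrightarrow> q \<noteq> F0 \<Longrightarrow> Ff k tg w = []" by (simp add: Ff_def)
lemma Ff_None: "trun k tg F0 w = None \<Longrightarrow> Ff k tg w = []" by (simp add: Ff_def)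

lemma out_is_Nil: "out_is T [] \<longleftrightarrow> T 0 = 0" by (simp add: out_is_def)

lemma loopB:
  assumes w: "set w \<subseteq> {1,2,3,4}" "w \<noteq> []"
  shows "\<forall>i q out. 1 \<le> i \<longrightarrow> i + d = length w \<longrightarrow> trun k tg F0 (take i w) = Some (q, out) \<longrightarrow>
     (\<exists>t \<le> d * CB (length w) + CC (length w). \<exists>p T.
        (st ^^ t) (Cons q False, i, tp (Bt w i out)) = (Halt, p, T) \<and> out_is T (Ff k tg w))"
proof (induction d)
  case 0
  show ?case
  proof (intro allI impI)
    fix i q out assume a: "1 \<le> i" "i + 0 = length w" "trun k tg F0 (take i w) = Some (q, out)"
    hence tr: "trun k tg F0 w = Some (q, out)" by simp
    have oo: "set out \<subseteq> {1,2,3,4}" "length out \<le> Suc B * length w" using trun_out[OF tr] by auto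
    have i: "i = length w" using a by simp
    show "\<exists>t \<le> 0 * CB (length w) + CC (length w). \<exists>p T.
        (st ^^ t) (Cons q False, i, tp (Bt w i out)) = (Halt, p, T) \<and> out_is T (Ff k tg w)"
    proof (cases "q = F0")
      case True
      have Ff: "Ff k tg w = out" using tr True by (simp add: Ff_Some)
      have s1: "st (Cons F0 False, length w, tp (Bt w (length w) out)) = (Seek, length [] + Suc (length w), tp (Ct [] (length w) out))"
        using endB_acc[OF w(2), of out] by (simp add: Ct_def)
      from phaseC[of "[]" out "length w"] oo obtain t p T where
        t: "t \<le> (length out + 1) * (2 * Suc (length w) + 3)"
        "(st ^^ t) (Seek, length [] + Suc (length w), tp (Ct [] (length w) out)) = (Halt, p, T)" "out_is T ([] @ out)"
        by auto
      have r: "(st ^^ (1 + t)) (Cons q False, i, tp (Bt w i out)) = (Halt, p, T)"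
        using run_seq[OF run_one[of st, OF s1] t(2)] True i by simp
      have m: "(length out + 1) * (2 * Suc (length w) + 3) \<le> (Suc B * length w + 1) * (2 * Suc (length w) + 3)"
        using oo(2) by (intro mult_le_mono1) simp
      have "1 + t \<le> (Suc B * length w + 1) * (2 * Suc (length w) + 3) + length w + 1"
        using t(1) m by linarith
      hence "1 + t \<le> 0 * CB (length w) + CC (length w)" unfolding CC_def by (simp only: mult_0 add_0)
      thus ?thesis using r t(3) Ff by auto
    next
      case False
      have Ff: "Ff k tg w = []" using tr False by (rule Ff_Some_not)
      from endB_rej[OF w(2) False, of out] obtain T where
        T: "(st ^^ Suc (length w)) (Cons q False, length w, tp (Bt w (length w) out)) = (Halt, 1, T)" "T 0 = 0"
        by blast
      have "Suc (length w) \<le> 0 * CB (length w) + CC (length w)" by (simp add: CC_def)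
      thus ?thesis using T Ff i by (auto simp: out_is_Nil)
    qed
  qed
next
  case (Suc d)
  show ?case
  proof (intro allI impI)
    fix i q out assume a: "1 \<le> i" "i + Suc d = length w" "trun k tg F0 (take i w) = Some (q, out)"
    have il: "i < length w" using a by simp
    have sw: "w = take i w @ w ! i # drop (Suc i) w" using il by (simp add: id_take_nth_drop)
    have oo: "set out \<subseteq> {1,2,3,4}" using trun_out[OF a(3)] by auto
    show "\<exists>t \<le> Suc d * CB (length w) + CC (length w). \<exists>p T.
        (st ^^ t) (Cons q False, i, tp (Bt w i out)) = (Halt, p, T) \<and> out_is T (Ff k tg w)"
    proof (cases "trans k tg q (w ! i)")
      case None
      have "trun k tg F0 w = None" using a(3) None
        by (subst sw) (simp add: trun_append del: trun.simps, simp)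
      hence Ff: "Ff k tg w = []" by (rule Ff_None)
      from rejB[OF w(1) a(1) il None, of out] obtain T where
        T: "(st ^^ Suc i) (Cons q False, i, tp (Bt w i out)) = (Halt, 1, T)" "T 0 = 0" by blast
      have "Suc i \<le> Suc d * CB (length w) + CC (length w)" using il by (simp add: CC_def)
      thus ?thesis using T Ff by (auto simp: out_is_Nil)
    next
      case (Some p)
      obtain q' ot where p: "p = (q', ot)" by (cases p)
      have tr: "trans k tg q (w ! i) = Some (q', ot)" using Some p by simp
      have t1: "trun k tg F0 (take (Suc i) w) = Some (q', out @ ot)"
        using trun_append_Some[OF a(3), of "[w ! i]" q' ot] tr il by (simp add: take_Suc_conv_app_nth)
      have lo: "length (out @ ot) \<le> Suc B * length w"
      proof -
        have "length (out @ ot) \<le> Suc B * length (take (Suc i) w)" using trun_out[OF t1] by simp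
        also have "\<dots> \<le> Suc B * length w" by (intro mult_le_mono2) simp
        finally show ?thesis .
      qed
      note it = iterB[OF w(1) a(1) il tr oo]
      have IH: "\<exists>t \<le> d * CB (length w) + CC (length w). \<exists>p T.
        (st ^^ t) (Cons q' False, Suc i, tp (Bt w (Suc i) (out @ ot))) = (Halt, p, T) \<and> out_is T (Ff k tg w)"
        using Suc.IH a t1 by simp
      then obtain t p T where t: "t \<le> d * CB (length w) + CC (length w)"
        "(st ^^ t) (Cons q' False, Suc i, tp (Bt w (Suc i) (out @ ot))) = (Halt, p, T)" "out_is T (Ff k tg w)" by blast
      note r = run_seq[OF it t(2)]
      have "2 * length w + 2 * length out + 2 * length ot + 3 - 2 * i \<le> CB (length w)"
        using lo by (simp add: CB_def)
      hence "2 * length w + 2 * length out + 2 * length ot + 3 - 2 * i + t \<le> Suc d * CB (length w) + CC (length w)"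
        using t(1) by simp
      thus ?thesis using r t(3) by blast
    qed
  qed
qed

lemma bound_poly: "n * CB n + CC n \<le> (5 * B + 11) * (n + 1) ^ 2"
proof -
  have e1: "n * CB n + CC n = (4*B+6) * (n*n) + (5*B+11)*n + 6"
    unfolding CB_def CC_def by (simp add: algebra_simps)
  have e2: "(5 * B + 11) * (n + 1) ^ 2 = (5*B+11) * (n*n) + (10*B+22)*n + (5*B+11)"
    by (simp add: algebra_simps power2_eq_square)
  have "(4*B+6) * (n*n) \<le> (5*B+11) * (n*n)" by (intro mult_le_mono1) simp
  moreover have "(5*B+11)*n \<le> (10*B+22)*n" by (intro mult_le_mono1) simp
  ultimately show ?thesis unfolding e1 e2 by linarith
qed

lemma runM:
  assumes w: "set w \<subseteq> {1,2,3,4}"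
  shows "\<exists>t \<le> (5 * B + 11) * (length w + 1) ^ 2. \<exists>p T.
     (st ^^ t) (Cons F0 True, 0, tp w) = (Halt, p, T) \<and> out_is T (Ff k tg w)"
proof (cases "w = []")
  case True
  have "st (Cons F0 True, 0, tp w) = (Halt, 1, (tp w)(0 := 0))"
    using True by (simp add: astep_def tp_def)
  moreover have "Ff k tg w = []" using True by (simp add: Ff_def)
  ultimately have "(st ^^ 1) (Cons F0 True, 0, tp w) = (Halt, 1, (tp w)(0 := 0))" "out_is ((tp w)(0 := 0)) (Ff k tg w)"
    by (simp_all add: out_is_Nil)
  moreover have "(1::nat) \<le> (5 * B + 11) * (length w + 1) ^ 2" by simp
  ultimately show ?thesis by blast
next
  case False
  obtain s ws where sw: "w = s # ws" using False by (cases w) auto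
  have s: "s \<in> {1,2,3,4}" using w sw by auto
  show ?thesis
  proof (cases "trans k tg F0 s")
    case None
    have "st (Cons F0 True, 0, tp w) = (Halt, 1, (tp w)(0 := 0))"
      using sw s None by (simp add: astep_def tp_def)
    moreover have "Ff k tg w = []" using sw None by (simp add: Ff_def)
    ultimately have "(st ^^ 1) (Cons F0 True, 0, tp w) = (Halt, 1, (tp w)(0 := 0))" "out_is ((tp w)(0 := 0)) (Ff k tg w)"
    by (simp_all add: out_is_Nil)
  moreover have "(1::nat) \<le> (5 * B + 11) * (length w + 1) ^ 2" by simp
  ultimately show ?thesis by blast
  next
    case (Some p)
    obtain q' ot where p: "p = (q', ot)" by (cases p)
    have tr: "trans k tg F0 (w ! 0) = Some (q', ot)" using Some p sw by simp
    note it = iterB0[OF w False tr]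
    have lo: "length ot \<le> Suc B" using trans_out[OF tr] by simp
    have n1: "1 \<le> length w" using sw by simp
    have t1: "trun k tg F0 (take 1 w) = Some (q', ot)" using tr sw by simp
    have L: "\<exists>t \<le> (length w - 1) * CB (length w) + CC (length w). \<exists>p T.
        (st ^^ t) (Cons q' False, 1, tp (Bt w 1 ot)) = (Halt, p, T) \<and> out_is T (Ff k tg w)"
      by (rule loopB[OF w False, rule_format]) (use n1 t1 in auto)
    then obtain t p T where
      t: "t \<le> (length w - 1) * CB (length w) + CC (length w)"
      "(st ^^ t) (Cons q' False, 1, tp (Bt w 1 ot)) = (Halt, p, T)" "out_is T (Ff k tg w)" by blast
    note r = run_seq[OF it t(2)]
    have "Suc B \<le> Suc B * length w" using mult_le_mono2[OF n1, of "Suc B"] by simp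
    hence c1: "2 * length w + 2 * length ot + 3 \<le> CB (length w)" using lo by (simp add: CB_def)
    have "2 * length w + 2 * length ot + 3 + t \<le> CB (length w) + ((length w - 1) * CB (length w) + CC (length w))"
      using c1 t(1) by linarith
    also have "\<dots> = length w * CB (length w) + CC (length w)"
    proof -
      obtain m where "length w = Suc m" using n1 by (cases "length w") auto
      thus ?thesis by simp
    qed
    also have "\<dots> \<le> (5 * B + 11) * (length w + 1) ^ 2" by (rule bound_poly)
    finally show ?thesis using r t(3) by blast
  qed
qed

end

instance tst :: countable by countable_datatype
instance ast :: countable by countable_datatype

definition enc :: "ast \<Rightarrow> nat" where
  "enc a = (if a = Halt then 0 else if a = Cons F0 True then 1 else to_nat a + 2)"

lemma enc_inj: "inj enc"
proof (rule injI)
  fix a b assume "enc a = enc b"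
  thus "a = b" unfolding enc_def by (auto split: if_splits)
qed

lemma enc_0: "enc a = 0 \<longleftrightarrow> a = Halt" by (simp add: enc_def)

fun inTS :: "nat \<Rightarrow> tst \<Rightarrow> bool" where
  "inTS k (Num r i b) = ((r = 1 \<or> r = 2) \<and> i \<le> k)"
| "inTS k _ = True"

definition TS :: "nat \<Rightarrow> tst set" where "TS k = {q. inTS k q}"

fun inAll :: "nat \<Rightarrow> nat \<Rightarrow> ast \<Rightarrow> bool" where
  "inAll k B (Cons q b) = inTS k q"
| "inAll k B (GoR q s b) = (inTS k q \<and> s \<in> {1,2,3,4})"
| "inAll k B (Wr q s j) = (inTS k q \<and> s \<in> {1,2,3,4} \<and> j \<le> Suc B)"
| "inAll k B (GoL q) = inTS k q"
| "inAll k B (Carry c) = (c \<in> {1,2,3,4})"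
| "inAll k B (Put c) = (c \<in> {1,2,3,4})"
| "inAll k B _ = True"

definition AllS :: "nat \<Rightarrow> nat \<Rightarrow> ast set" where "AllS k B = {a. inAll k B a}"

lemma finite_TS: "finite (TS k)"
proof (rule finite_subset)
  show "TS k \<subseteq> {F0, Rel1, Rel2} \<union> (\<lambda>(r, i, b). Num r i b) ` ({1,2} \<times> {..k} \<times> UNIV)"
  proof
    fix q assume "q \<in> TS k"
    thus "q \<in> {F0, Rel1, Rel2} \<union> (\<lambda>(r, i, b). Num r i b) ` ({1,2} \<times> {..k} \<times> UNIV)"
    proof (cases q)
      case (Num r i b)
      thus ?thesis using \<open>q \<in> TS k\<close> by (auto simp: TS_def intro!: rev_image_eqI[of "(r, i, b)"])
    qed auto
  qed
qed auto

lemma finite_AllS: "finite (AllS k B)"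
proof (rule finite_subset)
  let ?R = "{Halt, RejL, Seek, Fin, Term} \<union> (\<lambda>(q, b). Cons q b) ` (TS k \<times> UNIV)
     \<union> (\<lambda>(q, s, b). GoR q s b) ` (TS k \<times> {1,2,3,4} \<times> UNIV)
     \<union> (\<lambda>(q, s, j). Wr q s j) ` (TS k \<times> {1,2,3,4} \<times> {..Suc B})
     \<union> GoL ` TS k \<union> Carry ` {1,2,3,4} \<union> Put ` {1,2,3,4}"
  show "AllS k B \<subseteq> ?R"
  proof
    fix a assume a: "a \<in> AllS k B"
    show "a \<in> ?R"
    proof (cases a)
      case (Cons q b) thus ?thesis using a by (auto simp: AllS_def TS_def intro!: rev_image_eqI[of "(q, b)"])
    next
      case (GoR q s b) thus ?thesis using a by (auto simp: AllS_def TS_def intro!: rev_image_eqI[of "(q, s, b)"])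
    next
      case (Wr q s j) thus ?thesis using a by (auto simp: AllS_def TS_def intro!: rev_image_eqI[of "(q, s, j)"])
    qed (use a in \<open>auto simp: AllS_def TS_def\<close>)
  qed
  show "finite ?R" using finite_TS by auto
qed

lemma trans_TS: "q \<in> TS k \<Longrightarrow> trans k tg q s = Some (q', ot) \<Longrightarrow> q' \<in> TS k"
  unfolding TS_def by (cases q) (auto split: if_splits)

definition theM :: "nat \<Rightarrow> (nat \<Rightarrow> nat \<Rightarrow> nat list) \<Rightarrow> nat \<Rightarrow> tm" where
  "theM k tg B = \<lparr> n_states = Suc (Max (enc ` AllS k B)), n_syms = 8,
     delta = (\<lambda>q s. if q \<in> enc ` AllS k B then (case ad k tg (inv enc q) s of (a', s', m) \<Rightarrow> (enc a', s', m))
                    else (0, 0, MRight)) \<rparr>"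

lemma tp_read: "tp (rev ls @ rs) (length ls) = (case rs of [] \<Rightarrow> 0 | x # _ \<Rightarrow> x)"
  by (cases rs) (simp_all add: tp_def nth_append)

lemma tp_write: "tp (rev ls @ s' # tl rs) = (tp (rev ls @ rs))(length ls := s')"
proof (cases rs)
  case Nil thus ?thesis using tp_snoc[of "rev ls" s'] by simp
next
  case (Cons x rs') thus ?thesis using tp_upd[of "rev ls" x rs' s'] by simp
qed

context tmset
begin

lemma tw_out: "out_is (tp L) ot \<Longrightarrow> 0 \<notin> set ot \<Longrightarrow> takeWhile (\<lambda>s. s \<noteq> 0) L = ot"
proof (induction ot arbitrary: L)
  case Nil
  hence "tp L 0 = 0" by (simp add: out_is_def)
  thus ?case by (cases L) (auto simp: tp_def)
next
  case (Cons x ot)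
  have x0: "tp L 0 = x" "x \<noteq> 0" using Cons.prems by (auto simp: out_is_def)
  then obtain L' where L: "L = x # L'" by (cases L) (auto simp: tp_def)
  have sh: "tp L' i = tp L (Suc i)" for i unfolding L by (simp add: tp_def)
  have "out_is (tp L') ot" unfolding out_is_def
  proof (intro conjI allI impI)
    fix i assume "i < length ot"
    thus "tp L' i = ot ! i" using Cons.prems(1) sh[of i] unfolding out_is_def by auto
  next
    show "tp L' (length ot) = 0" using Cons.prems(1) sh[of "length ot"] unfolding out_is_def by auto
  qed
  thus ?case using Cons.IH Cons.prems(2) L x0 by simp
qed


lemma ad_closed: "a \<in> AllS k B \<Longrightarrow> fst (ad k tg a s) \<in> AllS k B"
proof -
  assume a: "a \<in> AllS k B"
  have wra_cl: "fst (wra k tg q s' j) \<in> AllS k B" if "q \<in> TS k" "s' \<in> {1,2,3,4}" "j \<le> Suc B" for q s' j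
  proof (cases "trans k tg q s'")
    case None thus ?thesis by (simp add: wra_def AllS_def)
  next
    case (Some p)
    obtain q' ot where p: "p = (q', ot)" by (cases p)
    have tr: "trans k tg q s' = Some (q', ot)" using Some p by simp
    have "length ot \<le> Suc B" using trans_out[OF tr] by simp
    moreover have "q' \<in> TS k" using trans_TS[OF that(1) tr] .
    ultimately show ?thesis using tr that unfolding wra_def AllS_def TS_def by auto
  qed
  show ?thesis
  proof (cases a)
    case (Cons q b)
    hence q: "q \<in> TS k" using a unfolding AllS_def TS_def by auto
    thus ?thesis using Cons unfolding AllS_def TS_def by (auto split: option.splits)
  next
    case (GoR q s' b)
    hence q: "q \<in> TS k" "s' \<in> {1,2,3,4}" using a unfolding AllS_def TS_def by auto
    have "fst (wra k tg q s' 0) \<in> AllS k B" using wra_cl q by simp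
    thus ?thesis using GoR q unfolding AllS_def TS_def by auto
  next
    case (Wr q s' j)
    hence q: "q \<in> TS k" "s' \<in> {1,2,3,4}" "j \<le> Suc B" using a unfolding AllS_def TS_def by auto
    thus ?thesis using Wr wra_cl by simp
  next
    case (GoL q)
    hence q: "q \<in> TS k" using a unfolding AllS_def TS_def by auto
    thus ?thesis using GoL unfolding AllS_def TS_def by auto
  next
    case (Carry c)
    hence "c \<in> {1,2,3,4}" using a unfolding AllS_def TS_def by auto
    thus ?thesis using Carry unfolding AllS_def TS_def by auto
  next
    case (Put c)
    thus ?thesis unfolding AllS_def TS_def by auto
  qed (auto simp: AllS_def)
qed

lemma ad_sym: "a \<in> AllS k B \<Longrightarrow> s < 8 \<Longrightarrow> fst (snd (ad k tg a s)) < 8"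
proof -
  assume a: "a \<in> AllS k B" and s: "s < 8"
  have wra_s: "fst (snd (wra k tg q s' j)) < 8" for q s' j
  proof (cases "trans k tg q s'")
    case None thus ?thesis by (simp add: wra_def)
  next
    case (Some p)
    obtain q' ot where p: "p = (q', ot)" by (cases p)
    have tr: "trans k tg q s' = Some (q', ot)" using Some p by simp
    have "set ot \<subseteq> {1,2,3,4}" using trans_out[OF tr] by simp
    hence "j < length ot \<Longrightarrow> ot ! j < 8" using nth_mem[of j ot] by fastforce
    thus ?thesis using tr by (simp add: wra_def)
  qed
  show ?thesis
  proof (cases a)
    case (Carry c)
    hence "c \<in> {1,2,3,4}" using a unfolding AllS_def TS_def by auto
    thus ?thesis using Carry s by auto
  next
    case (Put c)
    hence "c \<in> {1,2,3,4}" using a unfolding AllS_def TS_def by auto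
    thus ?thesis using Put s by auto
  qed (use s wra_s in \<open>auto split: option.splits\<close>)
qed

lemma F0_in: "Cons F0 True \<in> AllS k B" unfolding AllS_def by simp

lemma wf_theM: "wf_tm (theM k tg B)"
proof -
  let ?E = "enc ` AllS k B"
  have fin: "finite ?E" using finite_AllS by simp
  have "1 \<in> ?E" using F0_in by (force simp: enc_def)
  hence m1: "1 \<le> Max ?E" using fin by (simp add: Max_ge)
  have dl: "fst (delta (theM k tg B) q s) < n_states (theM k tg B) \<and> fst (snd (delta (theM k tg B) q s)) < n_syms (theM k tg B)"
    if "s < 8" for q s
  proof (cases "q \<in> ?E")
    case True
    then obtain a where a: "a \<in> AllS k B" "q = enc a" by auto
    have ia: "inv enc q = a" using a enc_inj by (simp add: inv_f_f)
    obtain a' s' m where e: "ad k tg a s = (a', s', m)" by (cases "ad k tg a s") auto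
    have "a' \<in> AllS k B" using ad_closed[OF a(1), of s] e by simp
    hence "enc a' \<le> Max ?E" using fin by (simp add: Max_ge)
    moreover have "s' < 8" using ad_sym[OF a(1) that] e by simp
    ultimately show ?thesis using True ia e by (simp add: theM_def)
  next
    case False thus ?thesis by (simp add: theM_def)
  qed
  show ?thesis unfolding wf_tm_def using m1 dl by (simp add: theM_def)
qed

definition corr :: "config \<Rightarrow> acfg \<Rightarrow> bool" where
  "corr c A \<longleftrightarrow> (case c of (q, ls, rs) \<Rightarrow> case A of (a, p, T) \<Rightarrow>
      a \<in> AllS k B \<and> q = enc a \<and> p = length ls \<and> T = tp (rev ls @ rs))"

lemma corr_step:
  assumes "corr c A"
  shows "corr (tm_step (theM k tg B) c) (st A)"
proof -
  obtain q ls rs where c: "c = (q, ls, rs)" by (cases c) auto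
  obtain a p T where A: "A = (a, p, T)" by (cases A) auto
  have h: "a \<in> AllS k B" "q = enc a" "p = length ls" "T = tp (rev ls @ rs)"
    using assms c A by (auto simp: corr_def)
  show ?thesis
  proof (cases "a = Halt")
    case True
    hence "q = 0" using h by (simp add: enc_def)
    thus ?thesis using True assms c A by (simp add: tm_step_def astep_def)
  next
    case False
    hence q0: "q \<noteq> 0" using h enc_0 by auto
    define s where "s = (case rs of [] \<Rightarrow> 0 | x # _ \<Rightarrow> x)"
    have Tp: "T p = s" using h tp_read by (simp add: s_def)
    obtain a' s' m where e: "ad k tg a s = (a', s', m)" by (cases "ad k tg a s") auto
    have ia: "inv enc q = a" using h enc_inj by (simp add: inv_f_f)
    have qE: "q \<in> enc ` AllS k B" using h by auto
    have d: "delta (theM k tg B) q s = (enc a', s', m)" using qE ia e by (simp add: theM_def)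
    have a'A: "a' \<in> AllS k B" using ad_closed[OF h(1), of s] e by simp
    have stA: "st A = (a', (case m of MRight \<Rightarrow> Suc p | MLeft \<Rightarrow> p - 1), T(p := s'))"
      using False Tp e A by (simp add: astep_def)
    have tw: "T(p := s') = tp (rev ls @ s' # tl rs)" using h tp_write by simp
    show ?thesis
    proof (cases m)
      case MRight
      have "tm_step (theM k tg B) c = (enc a', s' # ls, tl rs)"
        using q0 d MRight c by (simp add: tm_step_def s_def[symmetric])
      thus ?thesis using stA MRight a'A h tw by (simp add: corr_def)
    next
      case MLeft
      show ?thesis
      proof (cases ls)
        case Nil
        have "tm_step (theM k tg B) c = (enc a', [], s' # tl rs)"
          using q0 d MLeft c Nil by (simp add: tm_step_def s_def[symmetric])
        thus ?thesis using stA MLeft a'A h tw Nil by (simp add: corr_def)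
      next
        case (Cons y ls')
        have "tm_step (theM k tg B) c = (enc a', ls', y # s' # tl rs)"
          using q0 d MLeft c Cons by (simp add: tm_step_def s_def[symmetric])
        thus ?thesis using stA MLeft a'A h tw Cons by (simp add: corr_def)
      qed
    qed
  qed
qed

lemma corr_run: "corr c A \<Longrightarrow> corr (tm_run (theM k tg B) t c) ((st ^^ t) A)"
proof (induction t)
  case 0 thus ?case by (simp add: tm_run_def)
next
  case (Suc t)
  thus ?case using corr_step by (simp add: tm_run_def)
qed

lemma Ff_set: "0 \<notin> set (Ff k tg w)"
proof -
  have "set (Ff k tg w) \<subseteq> {1,2,3,4}"
  proof (cases "trun k tg F0 w")
    case None thus ?thesis by (simp add: Ff_def)
  next
    case (Some p)
    obtain q ot where p: "p = (q, ot)" by (cases p)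
    have "set ot \<subseteq> {1,2,3,4}" using trun_out[of F0 w q ot] Some p by simp
    thus ?thesis using Some p by (auto simp: Ff_def)
  qed
  thus ?thesis by auto
qed

lemma ptc: "poly_time_computable (Ff k tg)"
proof -
  have main: "\<forall>w. set w \<subseteq> {1,2,3,4} \<longrightarrow> (\<exists>t. t \<le> (5 * B + 11) * (length w + 1) ^ 2 \<and>
     fst (tm_run (theM k tg B) t (tm_init w)) = 0 \<and> tm_output (tm_run (theM k tg B) t (tm_init w)) = Ff k tg w)"
  proof (intro allI impI)
    fix w :: "nat list" assume w: "set w \<subseteq> {1,2,3,4}"
    from runM[OF w] obtain t p T where t: "t \<le> (5 * B + 11) * (length w + 1) ^ 2"
      "(st ^^ t) (Cons F0 True, 0, tp w) = (Halt, p, T)" "out_is T (Ff k tg w)" by blast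
    have c0: "corr (tm_init w) (Cons F0 True, 0, tp w)"
      using F0_in by (simp add: corr_def tm_init_def enc_def)
    have c1: "corr (tm_run (theM k tg B) t (tm_init w)) (Halt, p, T)"
      using corr_run[OF c0, of t] t(2) by simp
    obtain q ls rs where r: "tm_run (theM k tg B) t (tm_init w) = (q, ls, rs)" by (cases "tm_run (theM k tg B) t (tm_init w)") auto
    have h: "q = 0" "T = tp (rev ls @ rs)" using c1 r by (auto simp: corr_def enc_def)
    have "tm_output (q, ls, rs) = Ff k tg w"
      using tw_out[of "rev ls @ rs" "Ff k tg w"] t(3) h Ff_set by (simp add: tm_output_def)
    thus "\<exists>t. t \<le> (5 * B + 11) * (length w + 1) ^ 2 \<and> fst (tm_run (theM k tg B) t (tm_init w)) = 0 \<and>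
        tm_output (tm_run (theM k tg B) t (tm_init w)) = Ff k tg w"
      using t(1) r h by (intro exI[of _ t]) simp
  qed
  show ?thesis unfolding poly_time_computable_def using wf_theM main by blast
qed

end

theorem proposition4p1:
  fixes k l :: nat and xs ys :: "nat list"
  assumes "1 \<le> k" and "l \<le> k"
    and "length xs = k" and "length ys = k"
    and "standing_assumption k l xs ys"
  shows "poly_reduces
           (certain_lang {relR1, relR2} k l (sat2 (relR1, xs) (relR2, ys)))
           (certain_lang {relR} k l (sat2 (relR, xs) (relR, ys)))"
proof -
  define M where "M = sum_list xs + sum_list ys"
  have kd: "take l xs \<noteq> take l ys" using assms(5) by (simp add: standing_assumption_def)
  have vb: "\<forall>v \<in> set xs \<union> set ys. v < 2 ^ M"
  proof
    fix v assume "v \<in> set xs \<union> set ys"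
    hence "v \<le> M" unfolding M_def using member_le_sum_list[of v xs] member_le_sum_list[of v ys] by auto
    also have "M < 2 ^ M" by (rule less_exp)
    finally show "v < 2 ^ M" .
  qed
  interpret g: gsetup k l xs ys M
    by unfold_locales (use assms kd vb in auto)
  interpret t: tmset k "tgf M xs ys" "Suc M"
  proof
    show "\<forall>r i. set (tag M (vr xs ys r ! i)) \<subseteq> {1,2} \<and> length (tag M (vr xs ys r ! i)) \<le> Suc M"
      using fixbits_set by (auto simp: tag_def)
  qed
  show ?thesis unfolding poly_reduces_def
    using t.ptc g.red_correct[OF assms(5)] by blast
qed

end
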